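(* Let $\{\mathcal H,\Gamma\}$ be an isometric boundary pair for $A^*$ with domain $A_*=\operatorname{dom}\Gamma$ dense in $A^*$, and let $\widetilde A=\mathcal J(\Gamma)$ be its main transform. Assume there is a selfadjoint extension $H$ of $A$ with $H\subset A_*$ and a point $x\in\rho(H)\cap\mathbb R$, and let $M(x)=\{\hat h\in\mathcal H^2:\{\{f,xf\},\hat h\}\in\Gamma\text{ for some }f\in\mathfrak H\}$. Then: (i) the following are equivalent: (a) $M(x)$ is a selfadjoint relation in $\mathcal H$ and $0\in\rho(M(x)+xI)$; (b) $x\in\rho(\widetilde A)$; (ii) if (a)/(b) hold, then $\{\mathcal H,\Gamma\}$ is a unitary boundary pair for $A^*$ and its Weyl family $M(\lambda)=\{\hat h:\{\{f,\lambda f\},\hat h\}\in\Gamma\}$, $\lambda\in\mathbb C\setminus\mathbb R$, belongs to $\widetilde{\mathcal R}(\mathcal H)$.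
   Context: $A$ closed symmetric relation in a Hilbert space $\mathfrak H$; $\mathcal H$ a Hilbert space. A linear relation $\Gamma\subset\mathfrak H^2\times\mathcal H^2$ is isometric if $(f',g)-(f,g')=(h',k)-(h,k')$ for all $\{\{f,f'\},\{h,h'\}\},\{\{g,g'\},\{k,k'\}\}\in\Gamma$ and unitary if moreover $\Gamma^{-1}=\Gamma^{[*]}$, where $\Gamma^{[*]}=\{\{\{k,k'\},\{g,g'\}\}:(f',g)-(f,g')=(h',k)-(h,k')\ \forall\{\{f,f'\},\{h,h'\}\}\in\Gamma\}$. An isometric (unitary) boundary pair for $A^*$ is an isometric (unitary) $\Gamma$ with $\operatorname{dom}\Gamma\subset A^*$ dense in $A^*$. Main transform: $\mathcal J(\Gamma)=\{\{\{f,h\},\{f',-h'\}\}:\{\{f,f'\},\{h,h'\}\}\in\Gamma\}$, a linear relation in $\mathfrak H\oplus\mathcal H$. $\widetilde{\mathcal R}(\mathcal H)$ (Nevanlinna families): families of linear relations $M(\lambda)$, $\lambda\in\mathbb C\setminus\mathbb R$, in $\mathcal H$ with $M(\lambda)$ maximal dissipative for $\lambda\in\mathbb C_+$ (maximal accumulative for $\lambda\in\mathbb C_-$), $M(\lambda)^*=M(\bar\lambda)$, and $(M(\lambda)+\mu)^{-1}\in\mathcal B(\mathcal H)$ holomorphic in $\lambda\in\mathbb C_+$ ($\mathbb C_-$) for some (all) $\mu\in\mathbb C_+$ ($\mathbb C_-$). *)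

theory Defs
  imports "HOL-Analysis.Analysis"
begin

class chilbert = real_normed_vector + complete_space +
  fixes scaleC :: "complex \<Rightarrow> 'a \<Rightarrow> 'a" (infixr \<open>*\<^sub>C\<close> 75)
    and cinner :: "'a \<Rightarrow> 'a \<Rightarrow> complex"
  assumes scaleC_of_real: "scaleC (complex_of_real r) x = scaleR r x"
    and scaleC_add_right: "scaleC a (x + y) = scaleC a x + scaleC a y"
    and scaleC_add_left: "scaleC (a + b) x = scaleC a x + scaleC b x"
    and scaleC_scaleC: "scaleC a (scaleC b x) = scaleC (a * b) x"
    and scaleC_one: "scaleC 1 x = x"
    and cinner_add_left: "cinner (x + y) z = cinner x z + cinner y z"
    and cinner_scaleC_left: "cinner (scaleC c x) y = c * cinner x y"
    and cinner_commute: "cinner y x = cnj (cinner x y)"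
    and cinner_self_real: "Im (cinner x x) = 0"
    and cinner_self_nonneg: "0 \<le> Re (cinner x x)"
    and norm_cinner: "norm x = sqrt (Re (cinner x x))"

instantiation prod :: (chilbert, chilbert) chilbert
begin
definition scaleC_prod_def: "scaleC c p = (scaleC c (fst p), scaleC c (snd p))"
definition cinner_prod_def: "cinner p q = cinner (fst p) (fst q) + cinner (snd p) (snd q)"
instance
proof
  fix r :: real and x :: "'a \<times> 'b"
  show "scaleC (complex_of_real r) x = scaleR r x"
    by (simp add: scaleC_prod_def scaleC_of_real scaleR_prod_def)
next
  fix a :: complex and x y :: "'a \<times> 'b"
  show "scaleC a (x + y) = scaleC a x + scaleC a y"
    by (simp add: scaleC_prod_def scaleC_add_right)
next
  fix a b :: complex and x :: "'a \<times> 'b"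
  show "scaleC (a + b) x = scaleC a x + scaleC b x"
    by (simp add: scaleC_prod_def scaleC_add_left)
  show "scaleC a (scaleC b x) = scaleC (a * b) x"
    by (simp add: scaleC_prod_def scaleC_scaleC)
next
  fix x :: "'a \<times> 'b"
  show "scaleC 1 x = x" by (simp add: scaleC_prod_def scaleC_one)
  show "Im (cinner x x) = 0" by (simp add: cinner_prod_def cinner_self_real)
  show "0 \<le> Re (cinner x x)" by (simp add: cinner_prod_def cinner_self_nonneg)
  show "norm x = sqrt (Re (cinner x x))"
    by (simp add: cinner_prod_def norm_prod_def norm_cinner cinner_self_nonneg)
next
  fix x y z :: "'a \<times> 'b" and c :: complex
  show "cinner (x + y) z = cinner x z + cinner y z"
    by (simp add: cinner_prod_def cinner_add_left)
  show "cinner (scaleC c x) y = c * cinner x y"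
    by (simp add: cinner_prod_def scaleC_prod_def cinner_scaleC_left algebra_simps)
  show "cinner y x = cnj (cinner x y)"
    by (simp add: cinner_prod_def cinner_commute[of "fst y"] cinner_commute[of "snd y"])
qed
end

definition csubspace :: "'a::chilbert set \<Rightarrow> bool" where
  "csubspace S \<longleftrightarrow> 0 \<in> S \<and> (\<forall>x\<in>S. \<forall>y\<in>S. x + y \<in> S) \<and> (\<forall>c. \<forall>x\<in>S. scaleC c x \<in> S)"

abbreviation lin_rel :: "('a::chilbert \<times> 'a) set \<Rightarrow> bool" where
  "lin_rel T \<equiv> csubspace T"

definition rel_adj :: "('a::chilbert \<times> 'a) set \<Rightarrow> ('a \<times> 'a) set" where
  "rel_adj T = {(g, g'). \<forall>(f, f') \<in> T. cinner f' g = cinner f g'}"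

definition closed_symmetric :: "('a::chilbert \<times> 'a) set \<Rightarrow> bool" where
  "closed_symmetric A \<longleftrightarrow> lin_rel A \<and> closed A \<and> A \<subseteq> rel_adj A"

definition selfadjoint_rel :: "('a::chilbert \<times> 'a) set \<Rightarrow> bool" where
  "selfadjoint_rel T \<longleftrightarrow> T = rel_adj T"

definition clinear_op :: "('a::chilbert \<Rightarrow> 'b::chilbert) \<Rightarrow> bool" where
  "clinear_op B \<longleftrightarrow> (\<forall>x y. B (x + y) = B x + B y) \<and> (\<forall>c x. B (scaleC c x) = scaleC c (B x))"

definition bounded_op :: "('a::chilbert \<Rightarrow> 'a) \<Rightarrow> bool" where
  "bounded_op B \<longleftrightarrow> clinear_op B \<and> (\<exists>C. \<forall>x. norm (B x) \<le> C * norm x)"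

definition op_graph :: "('a \<Rightarrow> 'a) \<Rightarrow> ('a \<times> 'a) set" where
  "op_graph B = {(u, B u) | u. True}"

text \<open>Resolvent set of a linear relation: \<open>\<lambda> \<in> \<rho>(T)\<close> iff \<open>(T - \<lambda>)\<^sup>-\<^sup>1 \<in> \<B>(\<H>)\<close>,
  where \<open>(T - z)\<^sup>-\<^sup>1 = {{f' - z f, f} : {f, f'} \<in> T}\<close>.\<close>
definition rel_resolvent_set :: "('a::chilbert \<times> 'a) set \<Rightarrow> complex set" where
  "rel_resolvent_set T = {z. \<exists>B. bounded_op B \<and>
      {(f' - scaleC z f, f) | f f'. (f, f') \<in> T} = op_graph B}"

definition rel_plus_scalar :: "('a::chilbert \<times> 'a) set \<Rightarrow> complex \<Rightarrow> ('a \<times> 'a) set" where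
  "rel_plus_scalar T c = {(f, f' + scaleC c f) | f f'. (f, f') \<in> T}"

definition isometric_rel ::
  "(('h::chilbert \<times> 'h) \<times> ('k::chilbert \<times> 'k)) set \<Rightarrow> bool" where
  "isometric_rel \<Gamma> \<longleftrightarrow> csubspace \<Gamma> \<and>
     (\<forall>((f, f'), (h, h')) \<in> \<Gamma>. \<forall>((g, g'), (k, k')) \<in> \<Gamma>.
        cinner f' g - cinner f g' = cinner h' k - cinner h k')"

definition bdry_adj ::
  "(('h::chilbert \<times> 'h) \<times> ('k::chilbert \<times> 'k)) set \<Rightarrow> (('k \<times> 'k) \<times> ('h \<times> 'h)) set" where
  "bdry_adj \<Gamma> = {((k, k'), (g, g')). \<forall>((f, f'), (h, h')) \<in> \<Gamma>.
        cinner f' g - cinner f g' = cinner h' k - cinner h k'}"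

definition unitary_rel ::
  "(('h::chilbert \<times> 'h) \<times> ('k::chilbert \<times> 'k)) set \<Rightarrow> bool" where
  "unitary_rel \<Gamma> \<longleftrightarrow> isometric_rel \<Gamma> \<and> converse \<Gamma> = bdry_adj \<Gamma>"

definition isometric_boundary_pair ::
  "('h::chilbert \<times> 'h) set \<Rightarrow> (('h \<times> 'h) \<times> ('k::chilbert \<times> 'k)) set \<Rightarrow> bool" where
  "isometric_boundary_pair A \<Gamma> \<longleftrightarrow> isometric_rel \<Gamma> \<and> Domain \<Gamma> \<subseteq> rel_adj A
      \<and> rel_adj A \<subseteq> closure (Domain \<Gamma>)"

definition unitary_boundary_pair ::
  "('h::chilbert \<times> 'h) set \<Rightarrow> (('h \<times> 'h) \<times> ('k::chilbert \<times> 'k)) set \<Rightarrow> bool" where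
  "unitary_boundary_pair A \<Gamma> \<longleftrightarrow> unitary_rel \<Gamma> \<and> Domain \<Gamma> \<subseteq> rel_adj A
      \<and> rel_adj A \<subseteq> closure (Domain \<Gamma>)"

definition main_transform ::
  "(('h::chilbert \<times> 'h) \<times> ('k::chilbert \<times> 'k)) set \<Rightarrow> (('h \<times> 'k) \<times> ('h \<times> 'k)) set" where
  "main_transform \<Gamma> = {((f, h), (f', - h')) | f f' h h'. ((f, f'), (h, h')) \<in> \<Gamma>}"

definition weyl_family ::
  "(('h::chilbert \<times> 'h) \<times> ('k::chilbert \<times> 'k)) set \<Rightarrow> complex \<Rightarrow> ('k \<times> 'k) set" where
  "weyl_family \<Gamma> z = {hh. \<exists>f. ((f, scaleC z f), hh) \<in> \<Gamma>}"

definition dissipative_rel :: "('a::chilbert \<times> 'a) set \<Rightarrow> bool" where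
  "dissipative_rel T \<longleftrightarrow> lin_rel T \<and> (\<forall>(f, f') \<in> T. 0 \<le> Im (cinner f' f))"

definition accumulative_rel :: "('a::chilbert \<times> 'a) set \<Rightarrow> bool" where
  "accumulative_rel T \<longleftrightarrow> lin_rel T \<and> (\<forall>(f, f') \<in> T. Im (cinner f' f) \<le> 0)"

definition max_dissipative :: "('a::chilbert \<times> 'a) set \<Rightarrow> bool" where
  "max_dissipative T \<longleftrightarrow> dissipative_rel T \<and> (\<forall>S. dissipative_rel S \<and> T \<subseteq> S \<longrightarrow> S = T)"

definition max_accumulative :: "('a::chilbert \<times> 'a) set \<Rightarrow> bool" where
  "max_accumulative T \<longleftrightarrow> accumulative_rel T \<and> (\<forall>S. accumulative_rel S \<and> T \<subseteq> S \<longrightarrow> S = T)"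

definition op_holomorphic_on :: "complex set \<Rightarrow> (complex \<Rightarrow> 'a::chilbert \<Rightarrow> 'a) \<Rightarrow> bool" where
  "op_holomorphic_on S R \<longleftrightarrow> open S \<and> (\<forall>z\<in>S. bounded_op (R z) \<and> (\<exists>D. bounded_op D \<and>
     ((\<lambda>w. onorm (\<lambda>u. scaleC (1 / (w - z)) (R w u - R z u) - D u)) \<longlongrightarrow> 0) (at z)))"

definition rel_shift_inv :: "('a::chilbert \<times> 'a) set \<Rightarrow> complex \<Rightarrow> ('a \<times> 'a) set" where
  "rel_shift_inv T \<mu> = {(h' + scaleC \<mu> h, h) | h h'. (h, h') \<in> T}"

definition nevanlinna_family :: "(complex \<Rightarrow> ('k::chilbert \<times> 'k) set) \<Rightarrow> bool" where
  "nevanlinna_family M \<longleftrightarrow>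
     (\<forall>z. Im z > 0 \<longrightarrow> max_dissipative (M z)) \<and>
     (\<forall>z. Im z < 0 \<longrightarrow> max_accumulative (M z)) \<and>
     (\<forall>z. Im z \<noteq> 0 \<longrightarrow> rel_adj (M z) = M (cnj z)) \<and>
     (\<exists>\<mu> R. Im \<mu> > 0 \<and> (\<forall>z. Im z > 0 \<longrightarrow> rel_shift_inv (M z) \<mu> = op_graph (R z))
        \<and> op_holomorphic_on {z. Im z > 0} R) \<and>
     (\<exists>\<mu> R. Im \<mu> < 0 \<and> (\<forall>z. Im z < 0 \<longrightarrow> rel_shift_inv (M z) \<mu> = op_graph (R z))
        \<and> op_holomorphic_on {z. Im z < 0} R)"

end

theory Submission
  imports Defs
begin


interpretation cvs: module "scaleC :: complex \<Rightarrow> 'a::chilbert \<Rightarrow> 'a"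
  by standard (simp_all add: scaleC_add_right scaleC_add_left scaleC_scaleC scaleC_one)

lemma scaleC_zero_left [simp]: "scaleC 0 x = (0::'a::chilbert)"
  by (rule cvs.scale_zero_left)
lemma scaleC_zero_right [simp]: "scaleC c (0::'a::chilbert) = 0"
  by (rule cvs.scale_zero_right)
lemma scaleC_one' [simp]: "scaleC 1 x = (x::'a::chilbert)"
  by (rule scaleC_one)
lemma scaleC_minus_right: "scaleC c (- x) = - scaleC c (x::'a::chilbert)"
  by (rule cvs.scale_minus_right)
lemma scaleC_minus_left: "scaleC (- c) x = - scaleC c (x::'a::chilbert)"
  by (rule cvs.scale_minus_left)
lemma scaleC_diff_right: "scaleC c (x - y) = scaleC c x - scaleC c (y::'a::chilbert)"
  by (rule cvs.scale_right_diff_distrib)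
lemma scaleC_diff_left: "scaleC (a - b) x = scaleC a x - scaleC b (x::'a::chilbert)"
  by (rule cvs.scale_left_diff_distrib)

lemma cinner_zero_left [simp]: "cinner 0 y = 0"
proof -
  have "cinner (0::'a::chilbert) y = cinner 0 y + cinner 0 y" using cinner_add_left[of "0::'a" 0 y] by simp
  then show ?thesis by simp
qed
lemma cinner_add_right: "cinner x (y + z) = cinner x y + cinner x (z::'a::chilbert)"
  by (simp add: cinner_commute[of x y] cinner_commute[of x z] cinner_commute[of x "y+z"] cinner_add_left)
lemma cinner_zero_right [simp]: "cinner x (0::'a::chilbert) = 0"
  by (simp add: cinner_commute[of x 0])
lemma cinner_scaleC_right: "cinner x (scaleC c y) = cnj c * cinner x (y::'a::chilbert)"
  by (simp add: cinner_commute[of x y] cinner_commute[of x "scaleC c y"] cinner_scaleC_left)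
lemma cinner_minus_left: "cinner (- x) y = - cinner x (y::'a::chilbert)"
proof -
  have "cinner (- x) y + cinner x y = 0" using cinner_add_left[of "-x" x y] by simp
  then show ?thesis by (simp add: eq_neg_iff_add_eq_0)
qed
lemma cinner_minus_right: "cinner x (- y) = - cinner x (y::'a::chilbert)"
  by (simp add: cinner_commute[of x y] cinner_commute[of x "- y"] cinner_minus_left)
lemma cinner_diff_left: "cinner (x - y) z = cinner x z - cinner y (z::'a::chilbert)"
  using cinner_add_left[of x "- y" z] by (simp add: cinner_minus_left)
lemma cinner_diff_right: "cinner x (y - z) = cinner x y - cinner x (z::'a::chilbert)"
  using cinner_add_right[of x y "- z"] by (simp add: cinner_minus_right)

lemmas cinner_simps = cinner_add_left cinner_add_right cinner_diff_left cinner_diff_right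
  cinner_minus_left cinner_minus_right cinner_scaleC_left cinner_scaleC_right

lemma cinner_self: "cinner x x = complex_of_real ((norm (x::'a::chilbert))\<^sup>2)"
proof -
  have "Re (cinner x x) = (norm x)\<^sup>2" using norm_cinner[of x] cinner_self_nonneg[of x] by simp
  then show ?thesis using cinner_self_real[of x] by (simp add: complex_eq_iff)
qed

lemma cinner_self_eq_0: "cinner x x = 0 \<longleftrightarrow> x = (0::'a::chilbert)"
  by (simp add: cinner_self)

lemma scaleC_real: "scaleC (complex_of_real r) x = scaleR r (x::'a::chilbert)"
  by (rule scaleC_of_real)

lemma norm_scaleC: "norm (scaleC c x) = cmod c * norm (x::'a::chilbert)"
proof -
  have "cinner (scaleC c x) (scaleC c x) = (c * cnj c) * cinner x x"
    by (simp add: cinner_simps mult.assoc mult.left_commute)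
  also have "\<dots> = complex_of_real ((cmod c * norm x)\<^sup>2)"
    by (simp add: complex_norm_square[symmetric] cinner_self power_mult_distrib)
  finally have "complex_of_real ((norm (scaleC c x))\<^sup>2) = complex_of_real ((cmod c * norm x)\<^sup>2)"
    by (simp only: cinner_self)
  then have "(norm (scaleC c x))\<^sup>2 = (cmod c * norm x)\<^sup>2"
    by (simp only: of_real_eq_iff)
  then show ?thesis by (simp add: power2_eq_iff_nonneg)
qed

lemma Cauchy_Schwarz: "cmod (cinner x y) \<le> norm x * norm (y::'a::chilbert)"
proof (cases "y = 0")
  case True then show ?thesis by simp
next
  case False
  define t where "t = cinner x y / cinner y y"
  have yy: "cinner y y = complex_of_real ((norm y)\<^sup>2)" by (rule cinner_self)
  have ny: "norm y > 0" using False by simp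
  have "0 \<le> Re (cinner (x - scaleC t y) (x - scaleC t y))" by (rule cinner_self_nonneg)
  also have "cinner (x - scaleC t y) (x - scaleC t y) =
      cinner x x - cnj t * cinner x y - t * cinner y x + t * cnj t * cinner y y"
    by (simp add: cinner_simps algebra_simps)
  also have "\<dots> = cinner x x - cinner x y * cnj (cinner x y) / cinner y y"
    using ny by (simp add: t_def yy cinner_commute[of y x] field_simps)
  also have "\<dots> = complex_of_real ((norm x)\<^sup>2 - (cmod (cinner x y))\<^sup>2 / (norm y)\<^sup>2)"
    by (simp add: cinner_self yy complex_norm_square[symmetric])
  finally have "0 \<le> (norm x)\<^sup>2 - (cmod (cinner x y))\<^sup>2 / (norm y)\<^sup>2"
    by simp
  then have "(cmod (cinner x y))\<^sup>2 \<le> (norm x)\<^sup>2 * (norm y)\<^sup>2"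
    using ny by (simp add: field_simps)
  then have "(cmod (cinner x y))\<^sup>2 \<le> (norm x * norm y)\<^sup>2" by (simp add: power_mult_distrib)
  then show ?thesis by (meson norm_ge_zero power2_le_imp_le zero_le_mult_iff)
qed

lemma bounded_bilinear_cinner: "bounded_bilinear (cinner :: 'a::chilbert \<Rightarrow> 'a \<Rightarrow> complex)"
proof
  fix a a' b b' :: 'a and r :: real
  show "cinner (a + a') b = cinner a b + cinner a' b" by (rule cinner_add_left)
  show "cinner a (b + b') = cinner a b + cinner a b'" by (rule cinner_add_right)
  show "cinner (scaleR r a) b = scaleR r (cinner a b)"
    by (simp add: scaleC_real[symmetric] cinner_scaleC_left scaleR_conv_of_real)
  show "cinner a (scaleR r b) = scaleR r (cinner a b)"
    by (simp add: scaleC_real[symmetric] cinner_scaleC_right scaleR_conv_of_real)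
  show "\<exists>K. \<forall>a b. norm (cinner a b) \<le> norm a * norm b * K"
    by (rule exI[of _ 1]) (simp add: Cauchy_Schwarz)
qed

lemma cinner_eq_zero_all: "(\<And>u. cinner u x = 0) \<Longrightarrow> x = (0::'a::chilbert)"
  using cinner_self_eq_0 by blast


lemma scaleC_Pair [simp]: "scaleC c (a, b) = (scaleC c a, scaleC c b)"
  by (simp add: scaleC_prod_def)

lemma cinner_Pair [simp]: "cinner (a, b) (c, d) = cinner a c + cinner b d"
  by (simp add: cinner_prod_def)

lemma cs_zero: "csubspace S \<Longrightarrow> 0 \<in> S" by (simp add: csubspace_def)
lemma cs_add: "csubspace S \<Longrightarrow> x \<in> S \<Longrightarrow> y \<in> S \<Longrightarrow> x + y \<in> S" by (simp add: csubspace_def)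
lemma cs_scale: "csubspace S \<Longrightarrow> x \<in> S \<Longrightarrow> scaleC c x \<in> S" by (simp add: csubspace_def)
lemma cs_neg: "csubspace S \<Longrightarrow> x \<in> S \<Longrightarrow> - x \<in> S"
  using cs_scale[of S x "-1"] by (simp add: scaleC_minus_left)
lemma cs_diff: "csubspace S \<Longrightarrow> x \<in> S \<Longrightarrow> y \<in> S \<Longrightarrow> x - y \<in> S"
  using cs_add[of S x "- y"] cs_neg[of S y] by simp

definition bnd :: "('a::real_normed_vector \<Rightarrow> 'b::real_normed_vector) \<Rightarrow> real \<Rightarrow> bool" where
  "bnd F K \<longleftrightarrow> (\<forall>u. norm (F u) \<le> K * norm u)"

definition surj_at :: "('a::chilbert \<times> 'a) set \<Rightarrow> complex \<Rightarrow> bool" where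
  "surj_at T l \<longleftrightarrow> (\<forall>u. \<exists>f f'. (f, f') \<in> T \<and> f' + scaleC l f = u)"

definition lb :: "('a::chilbert \<times> 'a) set \<Rightarrow> complex \<Rightarrow> real \<Rightarrow> bool" where
  "lb T l c \<longleftrightarrow> (\<forall>f f'. (f, f') \<in> T \<longrightarrow> norm f \<le> c * norm (f' + scaleC l f))"

definition sol :: "('a::chilbert \<times> 'a) set \<Rightarrow> complex \<Rightarrow> 'a \<Rightarrow> 'a" where
  "sol T l u = (SOME f. \<exists>f'. (f, f') \<in> T \<and> f' + scaleC l f = u)"

lemma sol_unique:
  assumes T: "csubspace T" and lb: "lb T l c"
    and "(f, f') \<in> T" "(g, g') \<in> T" "f' + scaleC l f = g' + scaleC l g"
  shows "f = g"
proof -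
  have "(f - g, f' - g') \<in> T" using cs_diff[OF T assms(3,4)] by simp
  moreover have "(f' - g') + scaleC l (f - g) = 0"
    using assms(5) by (simp add: scaleC_diff_right algebra_simps)
  ultimately have "norm (f - g) \<le> 0" using lb unfolding lb_def by (metis norm_zero mult_zero_right)
  then show ?thesis by simp
qed

lemma sol_ex:
  assumes "surj_at T l"
  shows "\<exists>f'. (sol T l u, f') \<in> T \<and> f' + scaleC l (sol T l u) = u"
proof -
  have "\<exists>f f'. (f, f') \<in> T \<and> f' + scaleC l f = u" using assms unfolding surj_at_def by blast
  then show ?thesis unfolding sol_def by (rule someI_ex)
qed

lemma sol_eq:
  assumes T: "csubspace T" and s: "surj_at T l" and lb: "lb T l c" and ff: "(f, f') \<in> T"
  shows "sol T l (f' + scaleC l f) = f"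
proof -
  obtain g' where "(sol T l (f' + scaleC l f), g') \<in> T" "g' + scaleC l (sol T l (f' + scaleC l f)) = f' + scaleC l f"
    using sol_ex[OF s] by blast
  then show ?thesis using sol_unique[OF T lb] ff by blast
qed

lemma sol_eqI:
  assumes T: "csubspace T" and s: "surj_at T l" and lb: "lb T l c" and ff: "(f, f') \<in> T"
    and "f' + scaleC l f = u"
  shows "sol T l u = f"
  using sol_eq[OF T s lb ff] assms(5) by simp

lemma sol_linear:
  assumes T: "csubspace T" and s: "surj_at T l" and lb: "lb T l c"
  shows "clinear_op (sol T l)"
  unfolding clinear_op_def
proof (intro conjI allI)
  fix u v :: 'a
  obtain f' where f: "(sol T l u, f') \<in> T" "f' + scaleC l (sol T l u) = u" using sol_ex[OF s] by blast
  obtain g' where g: "(sol T l v, g') \<in> T" "g' + scaleC l (sol T l v) = v" using sol_ex[OF s] by blast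
  have "(sol T l u + sol T l v, f' + g') \<in> T" using cs_add[OF T f(1) g(1)] by simp
  moreover have "(f' + g') + scaleC l (sol T l u + sol T l v) = (f' + scaleC l (sol T l u)) + (g' + scaleC l (sol T l v))"
    by (simp add: algebra_simps)
  then have "(f' + g') + scaleC l (sol T l u + sol T l v) = u + v" using f(2) g(2) by simp
  ultimately show "sol T l (u + v) = sol T l u + sol T l v" by (rule sol_eqI[OF T s lb])
next
  fix a :: complex and u :: 'a
  obtain f' where f: "(sol T l u, f') \<in> T" "f' + scaleC l (sol T l u) = u" using sol_ex[OF s] by blast
  have "(scaleC a (sol T l u), scaleC a f') \<in> T" using cs_scale[OF T f(1), of a] by simp
  moreover have "scaleC a f' + scaleC l (scaleC a (sol T l u)) = scaleC a u"
    using f(2) by (metis cvs.scale_right_distrib cvs.scale_scale mult.commute)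
  ultimately show "sol T l (scaleC a u) = scaleC a (sol T l u)" by (rule sol_eqI[OF T s lb])
qed

lemma sol_bnd:
  assumes T: "csubspace T" and s: "surj_at T l" and lb: "lb T l c"
  shows "bnd (sol T l) c"
  unfolding bnd_def
proof
  fix u
  obtain f' where f: "(sol T l u, f') \<in> T" "f' + scaleC l (sol T l u) = u" using sol_ex[OF s] by blast
  then show "norm (sol T l u) \<le> c * norm u" using lb unfolding lb_def by metis
qed

lemma bounded_opI: "clinear_op B \<Longrightarrow> bnd B K \<Longrightarrow> bounded_op B"
  unfolding bounded_op_def bnd_def by blast

lemma shift_inv_sol:
  assumes T: "csubspace T" and s: "surj_at T l" and lb: "lb T l c"
  shows "rel_shift_inv T l = op_graph (sol T l)" and "bounded_op (sol T l)"
proof -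
  show "bounded_op (sol T l)" using sol_linear[OF assms] sol_bnd[OF assms] by (rule bounded_opI)
  show "rel_shift_inv T l = op_graph (sol T l)"
  proof (rule set_eqI, rule iffI)
    fix p assume "p \<in> rel_shift_inv T l"
    then obtain h h' where "p = (h' + scaleC l h, h)" "(h, h') \<in> T" unfolding rel_shift_inv_def by blast
    then show "p \<in> op_graph (sol T l)" unfolding op_graph_def using sol_eq[OF assms] by auto
  next
    fix p assume "p \<in> op_graph (sol T l)"
    then obtain u where p: "p = (u, sol T l u)" unfolding op_graph_def by blast
    obtain f' where "(sol T l u, f') \<in> T" "f' + scaleC l (sol T l u) = u" using sol_ex[OF s] by blast
    then show "p \<in> rel_shift_inv T l" unfolding rel_shift_inv_def p by force
  qed
qed

lemma graph_to_surj_lb: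
  assumes "rel_shift_inv T l = op_graph B" "bounded_op B"
  shows "surj_at T l" "\<exists>c. lb T l c" "\<And>f f'. (f, f') \<in> T \<Longrightarrow> B (f' + scaleC l f) = f"
proof -
  show B: "\<And>f f'. (f, f') \<in> T \<Longrightarrow> B (f' + scaleC l f) = f"
  proof -
    fix f f' assume "(f, f') \<in> T"
    then have "(f' + scaleC l f, f) \<in> op_graph B" using assms(1) unfolding rel_shift_inv_def by blast
    then show "B (f' + scaleC l f) = f" unfolding op_graph_def by auto
  qed
  show "surj_at T l" unfolding surj_at_def
  proof
    fix u
    have "(u, B u) \<in> rel_shift_inv T l" using assms(1) unfolding op_graph_def by blast
    then obtain h h' where "(u, B u) = (h' + scaleC l h, h)" "(h, h') \<in> T" unfolding rel_shift_inv_def by blast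
    then show "\<exists>f f'. (f, f') \<in> T \<and> f' + scaleC l f = u" by auto
  qed
  obtain C where C: "\<forall>x. norm (B x) \<le> C * norm x" using assms(2) unfolding bounded_op_def by blast
  show "\<exists>c. lb T l c" unfolding lb_def using B C by metis
qed

lemma resolvent_iff: "z \<in> rel_resolvent_set T \<longleftrightarrow> (\<exists>B. bounded_op B \<and> rel_shift_inv T (- z) = op_graph B)"
proof -
  have "{(f' - scaleC z f, f) | f f'. (f, f') \<in> T} = rel_shift_inv T (- z)"
    unfolding rel_shift_inv_def by (simp add: scaleC_minus_left)
  then show ?thesis unfolding rel_resolvent_set_def by simp
qed

lemma Im_bound_lb:
  assumes nz: "Im l \<noteq> 0" and D: "\<forall>f f'. (f, f') \<in> T \<longrightarrow> 0 \<le> Im (cinner f' f) * Im l"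
  shows "lb T l (1 / \<bar>Im l\<bar>)"
  unfolding lb_def
proof (intro allI impI)
  fix f f' assume ff: "(f, f') \<in> T"
  have e: "Im (cinner (f' + scaleC l f) f) = Im (cinner f' f) + Im l * (norm f)\<^sup>2"
    by (simp add: cinner_simps cinner_self)
  have "\<bar>Im l\<bar> * (norm f)\<^sup>2 \<le> \<bar>Im (cinner (f' + scaleC l f) f)\<bar>"
  proof (cases "Im l > 0")
    case True
    then have "0 \<le> Im (cinner f' f)" using D ff by (simp add: zero_le_mult_iff)
    then show ?thesis unfolding e using True by simp
  next
    case False
    then have "Im l < 0" using nz by simp
    then have "Im (cinner f' f) \<le> 0" using D ff by (simp add: zero_le_mult_iff)
    then show ?thesis unfolding e using \<open>Im l < 0\<close> by simp
  qed
  also have "\<dots> \<le> cmod (cinner (f' + scaleC l f) f)" by (rule abs_Im_le_cmod)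
  also have "\<dots> \<le> norm (f' + scaleC l f) * norm f" by (rule Cauchy_Schwarz)
  finally have *: "\<bar>Im l\<bar> * (norm f)\<^sup>2 \<le> norm (f' + scaleC l f) * norm f" .
  show "norm f \<le> 1 / \<bar>Im l\<bar> * norm (f' + scaleC l f)"
  proof (cases "f = 0")
    case True then show ?thesis by simp
  next
    case False
    then have "norm f > 0" by simp
    then have "\<bar>Im l\<bar> * norm f \<le> norm (f' + scaleC l f)"
      using * by (simp add: power2_eq_square)
    then show ?thesis using nz by (simp add: field_simps)
  qed
qed

lemma lb_mono: "lb T l c \<Longrightarrow> c \<le> d \<Longrightarrow> lb T l d"
  unfolding lb_def by (meson mult_right_mono norm_ge_zero order_trans)

lemma perturb:
  assumes T: "csubspace T" and s: "surj_at T l" and lb: "lb T l c" and c: "0 \<le> c"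
    and small: "cmod (l' - l) * c < 1"
  shows "surj_at T l'"
  unfolding surj_at_def
proof
  fix u :: 'a
  define R where "R = sol T l"
  have lin: "clinear_op R" using sol_linear[OF T s lb] by (simp add: R_def)
  have bR: "bnd R c" using sol_bnd[OF T s lb] by (simp add: R_def)
  define \<Phi> where "\<Phi> h = R (u - scaleC (l' - l) h)" for h
  have "\<exists>!h. \<Phi> h = h"
  proof (rule banach_fix_type[of "cmod (l' - l) * c"])
    show "0 \<le> cmod (l' - l) * c" using c by simp
    show "cmod (l' - l) * c < 1" by (rule small)
    show "\<forall>x y. dist (\<Phi> x) (\<Phi> y) \<le> cmod (l' - l) * c * dist x y"
    proof (intro allI)
      fix x y
      have "\<Phi> x - \<Phi> y = R (scaleC (l' - l) (y - x))"
        using lin unfolding \<Phi>_def clinear_op_def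
        by (metis (no_types, lifting) add_diff_cancel_left add_diff_cancel_left' diff_add_cancel scaleC_diff_right)
      then have "norm (\<Phi> x - \<Phi> y) \<le> c * (cmod (l' - l) * norm (y - x))"
        using bR unfolding bnd_def by (metis norm_scaleC)
      then show "dist (\<Phi> x) (\<Phi> y) \<le> cmod (l' - l) * c * dist x y"
        by (simp add: dist_norm norm_minus_commute mult_ac)
    qed
  qed
  then obtain h where h: "R (u - scaleC (l' - l) h) = h" unfolding \<Phi>_def by blast
  obtain h' where h': "(h, h') \<in> T" "h' + scaleC l h = u - scaleC (l' - l) h"
    using sol_ex[OF s, of "u - scaleC (l' - l) h"] h unfolding R_def by metis
  have "h' + scaleC l' h = u" using h'(2) by (simp add: scaleC_diff_left algebra_simps)
  then show "\<exists>f f'. (f, f') \<in> T \<and> f' + scaleC l' f = u" using h'(1) by blast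
qed

lemma segment_surj:
  assumes T: "csubspace T" and s: "surj_at T a" and ab: "Im a * Im b > 0"
    and D: "\<forall>f f'. (f, f') \<in> T \<longrightarrow> 0 \<le> Im (cinner f' f) * Im a"
  shows "surj_at T b"
proof -
  define m where "m = min \<bar>Im a\<bar> \<bar>Im b\<bar>"
  have m: "m > 0" using ab unfolding m_def by (auto simp: zero_less_mult_iff)
  define lam where "lam t = a + complex_of_real t * (b - a)" for t
  have Imlam: "Im (lam t) = (1 - t) * Im a + t * Im b" for t
    by (simp add: lam_def algebra_simps)
  have good: "m \<le> \<bar>Im (lam t)\<bar> \<and> Im (lam t) * Im a > 0" if t: "0 \<le> t" "t \<le> 1" for t
  proof (cases "Im a > 0")
    case True
    then have "Im b > 0" using ab by (simp add: zero_less_mult_iff)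
    then have "Im (lam t) \<ge> (1 - t) * m + t * m" unfolding Imlam m_def
      using t True by (intro add_mono mult_left_mono) auto
    then have "Im (lam t) \<ge> m" by (simp add: algebra_simps)
    then show ?thesis using m True by simp
  next
    case False
    then have "Im a < 0" using ab by (cases "Im a = 0") auto
    then have "Im b < 0" using ab by (simp add: zero_less_mult_iff)
    have "Im a \<le> - m" "Im b \<le> - m" using \<open>Im a < 0\<close> \<open>Im b < 0\<close> by (auto simp: m_def)
    then have "(1 - t) * Im a \<le> (1 - t) * (- m)" "t * Im b \<le> t * (- m)"
      using t by (metis diff_ge_0_iff_ge mult_left_mono)+
    then have "- Im (lam t) \<ge> m" unfolding Imlam by (simp add: algebra_simps)
    then show ?thesis using m \<open>Im a < 0\<close> by (simp add: mult_neg_neg)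
  qed
  have lbt: "lb T (lam t) (1 / m)" if t: "0 \<le> t" "t \<le> 1" for t
  proof -
    have g: "m \<le> \<bar>Im (lam t)\<bar>" "Im (lam t) * Im a > 0" using good[OF t] by auto
    have "\<forall>f f'. (f, f') \<in> T \<longrightarrow> 0 \<le> Im (cinner f' f) * Im (lam t)"
    proof (intro allI impI)
      fix f f' assume "(f, f') \<in> T"
      then have "0 \<le> Im (cinner f' f) * Im a" using D by blast
      then have "0 \<le> (Im (cinner f' f) * Im a) * (Im (lam t) * Im a)" using g(2) by simp
      then have "0 \<le> (Im (cinner f' f) * Im (lam t)) * (Im a * Im a)" by (simp add: mult_ac)
      moreover have "Im a \<noteq> 0" using g(2) by auto
      then have "Im a * Im a > 0" using not_real_square_gt_zero by blast
      ultimately show "0 \<le> Im (cinner f' f) * Im (lam t)" by (simp add: zero_le_mult_iff)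
    qed
    then have "lb T (lam t) (1 / \<bar>Im (lam t)\<bar>)" using g by (intro Im_bound_lb) auto
    then show ?thesis by (rule lb_mono) (use g m in \<open>simp add: frac_le\<close>)
  qed
  obtain N :: nat where N: "real N > cmod (b - a) / m" using reals_Archimedean2 by blast
  then have Npos: "N > 0" using m by (cases "N = 0") (auto, smt (verit) divide_nonneg_pos norm_ge_zero)
  have step: "cmod (lam (real (Suc k) / N) - lam (real k / N)) * (1 / m) < 1" for k
  proof -
    have "lam (real (Suc k) / N) - lam (real k / N) = complex_of_real (1 / N) * (b - a)"
      unfolding lam_def by (simp add: algebra_simps add_divide_distrib)
    then have "cmod (lam (real (Suc k) / N) - lam (real k / N)) = cmod (b - a) / N"
      by (simp add: norm_mult norm_divide)
    also have "\<dots> < m" using N Npos m by (simp add: field_simps)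
    finally show ?thesis using m by (simp add: field_simps)
  qed
  have "k \<le> N \<Longrightarrow> surj_at T (lam (real k / N))" for k
  proof (induction k)
    case 0
    then show ?case using s by (simp add: lam_def)
  next
    case (Suc k)
    then have k: "k \<le> N" by simp
    have t: "0 \<le> real k / N" "real k / N \<le> 1" using k Npos by auto
    show ?case
      by (rule perturb[OF T Suc.IH[OF k] lbt[OF t] _ step]) (use m in simp)
  qed
  from this[of N] show ?thesis using Npos by (simp add: lam_def)
qed


lemma clinear_zero: "clinear_op F \<Longrightarrow> F 0 = 0"
  unfolding clinear_op_def by (metis scaleC_zero_left)

lemma clinear_diff: "clinear_op F \<Longrightarrow> F (x - y) = F x - F y"
  unfolding clinear_op_def by (metis add_diff_cancel diff_add_cancel)

lemma clinear_neg: "clinear_op F \<Longrightarrow> F (- x) = - F x"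
  using clinear_diff[of F 0 x] clinear_zero[of F] by simp

lemma clinear_scale: "clinear_op F \<Longrightarrow> F (scaleC c x) = scaleC c (F x)"
  unfolding clinear_op_def by blast

lemma clinear_add: "clinear_op F \<Longrightarrow> F (x + y) = F x + F y"
  unfolding clinear_op_def by blast

lemma cont_cinner_left: "continuous_on UNIV (\<lambda>w. cinner w (c::'a::chilbert))"
  using bounded_bilinear.bounded_linear_left[OF bounded_bilinear_cinner]
  by (intro linear_continuous_on) blast

lemma hellinger_toeplitz:
  fixes R :: "'a::chilbert \<Rightarrow> 'a"
  assumes lin: "clinear_op R" and sym: "\<And>u w. cinner (R u) w = cinner u (R w)"
  shows "\<exists>K. bnd R K"
proof -
  define F where "F n = {w. \<forall>u. norm u \<le> 1 \<longrightarrow> cmod (cinner w (R u)) \<le> real n}" for n :: nat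
  have clo: "closed (F n)" for n
  proof -
    have "F n = (\<Inter>u\<in>{u. norm u \<le> 1}. {w. cmod (cinner w (R u)) \<le> real n})"
      unfolding F_def by auto
    moreover have "closed {w. cmod (cinner w (R u)) \<le> real n}" for u
      by (intro closed_Collect_le continuous_on_norm cont_cinner_left continuous_on_const)
    ultimately show ?thesis by auto
  qed
  have cov: "\<exists>n. w \<in> F n" for w
  proof -
    obtain n :: nat where n: "norm (R w) \<le> real n" using real_arch_simple by blast
    have "cmod (cinner w (R u)) \<le> real n" if "norm u \<le> 1" for u
    proof -
      have "cmod (cinner w (R u)) = cmod (cinner (R u) w)"
        by (simp add: cinner_commute[of w "R u"])
      also have "\<dots> = cmod (cinner u (R w))" by (simp add: sym)
      also have "\<dots> \<le> norm u * norm (R w)" by (rule Cauchy_Schwarz)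
      also have "\<dots> \<le> 1 * real n" using that n by (intro mult_mono) auto
      finally show ?thesis by simp
    qed
    then show ?thesis unfolding F_def by blast
  qed
  have "\<exists>n. interior (F n) \<noteq> {}"
  proof (rule ccontr)
    assume "\<not> ?thesis"
    then have e: "\<And>n. interior (F n) = {}" by blast
    have "euclidean interior_of \<Union>(range F) = {}"
    proof (rule Baire_category_alt)
      show "completely_metrizable_space (euclidean :: 'a topology) \<or>
          locally_compact_space (euclidean :: 'a topology) \<and> regular_space (euclidean :: 'a topology)"
        using completely_metrizable_space_euclidean by blast
      show "countable (range F)" by simp
      show "\<And>T. T \<in> range F \<Longrightarrow> closedin euclidean T \<and> euclidean interior_of T = {}"
        using clo e by (auto simp: closed_closedin[symmetric])
    qed
    moreover have "\<Union>(range F) = UNIV" using cov by blast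
    ultimately show False by simp
  qed
  then obtain n w0 where "w0 \<in> interior (F n)" by blast
  then obtain r where r: "r > 0" "ball w0 r \<subseteq> F n" using mem_interior by blast
  have unit: "norm (R u) \<le> 4 * real n / r" if u: "norm u \<le> 1" for u
  proof (cases "R u = 0")
    case True then show ?thesis using r by simp
  next
    case False
    define v where "v = R u"
    have nv: "norm v > 0" using False by (simp add: v_def)
    define w where "w = w0 + scaleR (r / 2 / norm v) v"
    have "dist w0 w < r" unfolding w_def dist_norm using r nv by simp
    then have "w \<in> F n" using r by auto
    then have b1: "cmod (cinner w v) \<le> real n" unfolding F_def v_def using u by blast
    have "w0 \<in> F n" using r by auto
    then have b2: "cmod (cinner w0 v) \<le> real n" unfolding F_def v_def using u by blast
    have "cinner w v - cinner w0 v = complex_of_real (r / 2 / norm v) * cinner v v"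
      unfolding w_def by (simp add: cinner_add_left scaleC_real[symmetric] cinner_scaleC_left)
    also have "\<dots> = complex_of_real (r / 2 * norm v)"
      using nv by (simp add: cinner_self power2_eq_square)
    finally have "cmod (cinner w v - cinner w0 v) = cmod (complex_of_real (r / 2 * norm v))" by (rule arg_cong)
    moreover have "cmod (complex_of_real (r / 2 * norm v)) = r / 2 * norm v"
      unfolding norm_of_real using r by simp
    ultimately have "r / 2 * norm v = cmod (cinner w v - cinner w0 v)" by simp
    also have "\<dots> \<le> cmod (cinner w v) + cmod (cinner w0 v)" by (rule norm_triangle_ineq4)
    also have "\<dots> \<le> 2 * real n" using b1 b2 by simp
    finally have "r * norm v \<le> 4 * real n" by simp
    then show ?thesis using r unfolding v_def by (simp add: field_simps)
  qed
  have "norm (R u) \<le> (4 * real n / r) * norm u" for u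
  proof (cases "u = 0")
    case True then show ?thesis using clinear_zero[OF lin] by simp
  next
    case False
    define u' where "u' = scaleC (complex_of_real (1 / norm u)) u"
    have "norm u' = 1" using False by (simp add: u'_def norm_scaleC norm_divide)
    then have "norm (R u') \<le> 4 * real n / r" by (intro unit) simp
    moreover have "R u' = scaleC (complex_of_real (1 / norm u)) (R u)"
      unfolding u'_def by (rule clinear_scale[OF lin])
    ultimately have "norm (R u) / norm u \<le> 4 * real n / r"
      using False by (simp add: norm_scaleC norm_divide)
    then show ?thesis using False by (simp add: field_simps)
  qed
  then show ?thesis unfolding bnd_def by blast
qed


lemma iso:
  assumes "isometric_rel \<Gamma>" "((f, f'), (h, h')) \<in> \<Gamma>" "((g, g'), (k, k')) \<in> \<Gamma>"
  shows "cinner f' g - cinner f g' = cinner h' k - cinner h k'"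
  using assms unfolding isometric_rel_def by fastforce

lemma iso_cs: "isometric_rel \<Gamma> \<Longrightarrow> csubspace \<Gamma>"
  unfolding isometric_rel_def by blast

lemma At_mem: "((a, b), (a', b')) \<in> main_transform \<Gamma> \<longleftrightarrow> ((a, a'), (b, - b')) \<in> \<Gamma>"
  unfolding main_transform_def by force

lemma M_mem: "hh \<in> weyl_family \<Gamma> z \<longleftrightarrow> (\<exists>f. ((f, scaleC z f), hh) \<in> \<Gamma>)"
  unfolding weyl_family_def by simp

lemma At_cs:
  assumes "csubspace \<Gamma>"
  shows "csubspace (main_transform \<Gamma>)"
  unfolding csubspace_def
proof (intro conjI ballI allI)
  show "0 \<in> main_transform \<Gamma>"
    using cs_zero[OF assms] by (simp add: zero_prod_def At_mem)
next
  fix p q assume pq: "p \<in> main_transform \<Gamma>" "q \<in> main_transform \<Gamma>"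
  obtain a b a' b' where p: "p = ((a, b), (a', b'))" by (metis prod.exhaust)
  obtain c d c' d' where q: "q = ((c, d), (c', d'))" by (metis prod.exhaust)
  have "((a, a'), (b, - b')) + ((c, c'), (d, - d')) \<in> \<Gamma>"
    using pq cs_add[OF assms] unfolding p q At_mem by blast
  then have "((a + c, a' + c'), (b + d, - (b' + d'))) \<in> \<Gamma>" by simp
  then show "p + q \<in> main_transform \<Gamma>" by (simp add: p q At_mem)
next
  fix c and p assume pp: "p \<in> main_transform \<Gamma>"
  obtain a b a' b' where p: "p = ((a, b), (a', b'))" by (metis prod.exhaust)
  have "scaleC c ((a, a'), (b, - b')) \<in> \<Gamma>"
    using pp cs_scale[OF assms] unfolding p At_mem by blast
  then have "((scaleC c a, scaleC c a'), (scaleC c b, - scaleC c b')) \<in> \<Gamma>"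
    by (simp add: scaleC_minus_right)
  then show "scaleC c p \<in> main_transform \<Gamma>" by (simp add: p At_mem)
qed

lemma M_cs:
  assumes "csubspace \<Gamma>"
  shows "csubspace (weyl_family \<Gamma> z)"
  unfolding csubspace_def
proof (intro conjI ballI allI)
  show "0 \<in> weyl_family \<Gamma> z"
    using cs_zero[OF assms] unfolding M_mem by (intro exI[of _ 0]) (simp add: zero_prod_def)
next
  fix p q assume "p \<in> weyl_family \<Gamma> z" "q \<in> weyl_family \<Gamma> z"
  then obtain f g where "((f, scaleC z f), p) \<in> \<Gamma>" "((g, scaleC z g), q) \<in> \<Gamma>" unfolding M_mem by blast
  then have "((f, scaleC z f), p) + ((g, scaleC z g), q) \<in> \<Gamma>"
    using cs_add[OF assms] by blast
  moreover have "((f, scaleC z f), p) + ((g, scaleC z g), q) = ((f + g, scaleC z (f + g)), p + q)"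
    by (simp add: scaleC_add_right)
  ultimately have "((f + g, scaleC z (f + g)), p + q) \<in> \<Gamma>" by simp
  then show "p + q \<in> weyl_family \<Gamma> z" unfolding M_mem by blast
next
  fix c and p assume "p \<in> weyl_family \<Gamma> z"
  then obtain f where "((f, scaleC z f), p) \<in> \<Gamma>" unfolding M_mem by blast
  then have "scaleC c ((f, scaleC z f), p) \<in> \<Gamma>" using cs_scale[OF assms] by blast
  then have "((scaleC c f, scaleC z (scaleC c f)), scaleC c p) \<in> \<Gamma>"
    by (simp add: scaleC_scaleC mult.commute)
  then show "scaleC c p \<in> weyl_family \<Gamma> z" unfolding M_mem by blast
qed

lemma At_sym:
  assumes I: "isometric_rel \<Gamma>" and "(a, a') \<in> main_transform \<Gamma>" "(b, b') \<in> main_transform \<Gamma>"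
  shows "cinner a' b = cinner a b'"
proof -
  obtain f h where a: "a = (f, h)" by (cases a)
  obtain f' h' where a': "a' = (f', h')" by (cases a')
  obtain g k where b: "b = (g, k)" by (cases b)
  obtain g' k' where b': "b' = (g', k')" by (cases b')
  have "((f, f'), (h, - h')) \<in> \<Gamma>" "((g, g'), (k, - k')) \<in> \<Gamma>"
    using assms(2,3) by (auto simp: a a' b b' At_mem)
  from iso[OF I this] show ?thesis
    by (simp add: a a' b b' cinner_minus_left cinner_minus_right algebra_simps)
qed

lemma At_Im:
  assumes I: "isometric_rel \<Gamma>" and "(a, a') \<in> main_transform \<Gamma>"
  shows "Im (cinner a' a) = 0"
proof -
  have "cinner a' a = cinner a a'" using At_sym[OF I assms(2) assms(2)] .
  also have "\<dots> = cnj (cinner a' a)" by (rule cinner_commute)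
  finally show ?thesis by (metis Reals_cnj_iff complex_is_Real_iff)
qed

lemma M_Im:
  assumes I: "isometric_rel \<Gamma>" and "((f, scaleC z f), (h, h')) \<in> \<Gamma>"
  shows "Im (cinner h' h) = Im z * (norm f)\<^sup>2"
proof -
  have e: "cinner (scaleC z f) f - cinner f (scaleC z f) = cinner h' h - cinner h h'"
    using iso[OF I assms(2) assms(2)] .
  have l: "cinner (scaleC z f) f - cinner f (scaleC z f) = (z - cnj z) * complex_of_real ((norm f)\<^sup>2)"
    by (simp add: cinner_simps cinner_self algebra_simps)
  have r: "cinner h' h - cinner h h' = cinner h' h - cnj (cinner h' h)"
    by (simp add: cinner_commute[of h h'])
  have eq: "(z - cnj z) * complex_of_real ((norm f)\<^sup>2) = cinner h' h - cnj (cinner h' h)"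
    using e l r by metis
  have "Im (cinner h' h - cnj (cinner h' h)) = 2 * Im (cinner h' h)" by simp
  moreover have "Im ((z - cnj z) * complex_of_real ((norm f)\<^sup>2)) = 2 * Im z * (norm f)\<^sup>2"
    by (simp add: complex_diff_cnj)
  ultimately show ?thesis using arg_cong[OF eq, of Im] by simp
qed

lemma M_D:
  assumes I: "isometric_rel \<Gamma>" and "Im z * Im a \<ge> 0"
  shows "\<forall>h h'. (h, h') \<in> weyl_family \<Gamma> z \<longrightarrow> 0 \<le> Im (cinner h' h) * Im a"
proof (intro allI impI)
  fix h h' assume "(h, h') \<in> weyl_family \<Gamma> z"
  then obtain f where "((f, scaleC z f), (h, h')) \<in> \<Gamma>" unfolding M_mem by blast
  from M_Im[OF I this] have eq: "Im (cinner h' h) * Im a = (Im z * Im a) * (norm f)\<^sup>2" by simp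
  have "0 \<le> (Im z * Im a) * (norm f)\<^sup>2" using assms(2) by simp
  then show "0 \<le> Im (cinner h' h) * Im a" by (simp only: eq)
qed

lemma At_D:
  assumes I: "isometric_rel \<Gamma>"
  shows "\<forall>f f'. (f, f') \<in> main_transform \<Gamma> \<longrightarrow> 0 \<le> Im (cinner f' f) * Im a"
  using At_Im[OF I] by simp

lemma weyl_adj:
  assumes I: "isometric_rel \<Gamma>"
  shows "weyl_family \<Gamma> (cnj z) \<subseteq> rel_adj (weyl_family \<Gamma> z)"
proof
  fix p assume "p \<in> weyl_family \<Gamma> (cnj z)"
  then obtain k k' g where p: "p = (k, k')" "((g, scaleC (cnj z) g), (k, k')) \<in> \<Gamma>"
    unfolding M_mem by (cases p) blast
  have "cinner h' k = cinner h k'" if hh: "(h, h') \<in> weyl_family \<Gamma> z" for h h'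
  proof -
    obtain f where f: "((f, scaleC z f), (h, h')) \<in> \<Gamma>" using hh unfolding M_mem by blast
    from iso[OF I f p(2)] have "cinner (scaleC z f) g - cinner f (scaleC (cnj z) g) = cinner h' k - cinner h k'" .
    then show ?thesis by (simp add: cinner_simps)
  qed
  then show "p \<in> rel_adj (weyl_family \<Gamma> z)" unfolding rel_adj_def p by blast
qed

lemma adj_lemma:
  assumes T: "csubspace T" and S: "csubspace S" and ST: "S \<subseteq> rel_adj T"
    and sS: "surj_at S (cnj l)" and sT: "surj_at T l"
  shows "rel_adj T \<subseteq> S"
proof
  fix p assume p: "p \<in> rel_adj T"
  obtain k k' where pk: "p = (k, k')" by (cases p)
  obtain m m' where m: "(m, m') \<in> S" "m' + scaleC (cnj l) m = k' + scaleC (cnj l) k"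
    using sS unfolding surj_at_def by blast
  define d where "d = k - m"
  define d' where "d' = k' - m'"
  have dd: "d' = - scaleC (cnj l) d"
    using m(2) unfolding d_def d'_def by (simp add: scaleC_diff_right algebra_simps)
  have madj: "(m, m') \<in> rel_adj T" using ST m(1) by blast
  have orth: "cinner u d = 0" for u
  proof -
    obtain h h' where h: "(h, h') \<in> T" "h' + scaleC l h = u" using sT unfolding surj_at_def by blast
    have "cinner h' k = cinner h k'" using p h(1) unfolding pk rel_adj_def by blast
    moreover have "cinner h' m = cinner h m'" using madj h(1) unfolding rel_adj_def by blast
    ultimately have "cinner h' d = cinner h d'" unfolding d_def d'_def by (simp add: cinner_simps)
    then have "cinner h' d = - l * cinner h d" by (simp add: dd cinner_simps)
    then show ?thesis using h(2) by (auto simp: cinner_simps)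
  qed
  have "d = 0" using orth cinner_eq_zero_all by blast
  then have "d' = 0" using dd by simp
  then show "p \<in> S" using \<open>d = 0\<close> m(1) unfolding pk d_def d'_def by simp
qed

lemma max_lemma:
  assumes S: "csubspace S" and TS: "T \<subseteq> S" and sT: "surj_at T mu" and nz: "Im mu \<noteq> 0"
    and D: "\<forall>f f'. (f, f') \<in> S \<longrightarrow> 0 \<le> Im (cinner f' f) * Im mu"
  shows "S \<subseteq> T"
proof
  fix p assume p: "p \<in> S"
  obtain h h' where ph: "p = (h, h')" by (cases p)
  obtain k k' where k: "(k, k') \<in> T" "k' + scaleC mu k = h' + scaleC mu h"
    using sT unfolding surj_at_def by blast
  define d where "d = h - k"
  have dS: "(d, h' - k') \<in> S" using cs_diff[OF S, of p "(k, k')"] p k(1) TS unfolding ph d_def by auto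
  have dd: "h' - k' = - scaleC mu d" using k(2) unfolding d_def by (simp add: scaleC_diff_right algebra_simps)
  have "0 \<le> Im (cinner (- scaleC mu d) d) * Im mu" using D dS dd by metis
  also have "Im (cinner (- scaleC mu d) d) * Im mu = - (Im mu * Im mu) * (norm d)\<^sup>2"
    by (simp add: cinner_simps cinner_self)
  finally have "(Im mu * Im mu) * (norm d)\<^sup>2 \<le> 0" by simp
  moreover have "Im mu * Im mu > 0" using nz not_real_square_gt_zero by blast
  ultimately have "norm d = 0"
    by (metis mult_le_0_iff not_le pos2 zero_less_power zero_less_norm_iff norm_zero)
  then have "h = k" "h' = k'" using dd unfolding d_def by auto
  then show "p \<in> T" using k(1) unfolding ph by simp
qed


definition inj_at :: "('a::chilbert \<times> 'a) set \<Rightarrow> complex \<Rightarrow> bool" where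
  "inj_at T l \<longleftrightarrow> (\<forall>f f'. (f, f') \<in> T \<longrightarrow> f' + scaleC l f = 0 \<longrightarrow> f = 0)"

lemma lb_inj: "lb T l c \<Longrightarrow> inj_at T l"
  unfolding inj_at_def
proof (intro allI impI)
  fix f f' assume "lb T l c" "(f, f') \<in> T" "f' + scaleC l f = 0"
  then have "norm f \<le> c * norm (0::'a)" unfolding lb_def by metis
  then show "f = 0" by simp
qed

lemma sol_unique_inj:
  assumes T: "csubspace T" and inj: "inj_at T l"
    and "(f, f') \<in> T" "(g, g') \<in> T" "f' + scaleC l f = g' + scaleC l g"
  shows "f = g"
proof -
  have "(f - g, f' - g') \<in> T" using cs_diff[OF T assms(3,4)] by simp
  moreover have "(f' - g') + scaleC l (f - g) = 0"
    using assms(5) by (simp add: scaleC_diff_right algebra_simps)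
  ultimately have "f - g = 0" using inj unfolding inj_at_def by blast
  then show ?thesis by simp
qed

lemma sol_eqI_inj:
  assumes T: "csubspace T" and s: "surj_at T l" and inj: "inj_at T l" and ff: "(f, f') \<in> T"
    and "f' + scaleC l f = u"
  shows "sol T l u = f"
proof -
  obtain g' where "(sol T l u, g') \<in> T" "g' + scaleC l (sol T l u) = u"
    using sol_ex[OF s] by blast
  then show ?thesis using sol_unique_inj[OF T inj] ff assms(5) by metis
qed

lemma sol_linear_inj:
  assumes T: "csubspace T" and s: "surj_at T l" and inj: "inj_at T l"
  shows "clinear_op (sol T l)"
  unfolding clinear_op_def
proof (intro conjI allI)
  fix u v :: 'a
  obtain f' where f: "(sol T l u, f') \<in> T" "f' + scaleC l (sol T l u) = u" using sol_ex[OF s] by blast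
  obtain g' where g: "(sol T l v, g') \<in> T" "g' + scaleC l (sol T l v) = v" using sol_ex[OF s] by blast
  have "(sol T l u + sol T l v, f' + g') \<in> T" using cs_add[OF T f(1) g(1)] by simp
  moreover have "(f' + g') + scaleC l (sol T l u + sol T l v) = (f' + scaleC l (sol T l u)) + (g' + scaleC l (sol T l v))"
    by (simp add: algebra_simps)
  then have "(f' + g') + scaleC l (sol T l u + sol T l v) = u + v" using f(2) g(2) by simp
  ultimately show "sol T l (u + v) = sol T l u + sol T l v" by (rule sol_eqI_inj[OF T s inj])
next
  fix a :: complex and u :: 'a
  obtain f' where f: "(sol T l u, f') \<in> T" "f' + scaleC l (sol T l u) = u" using sol_ex[OF s] by blast
  have "(scaleC a (sol T l u), scaleC a f') \<in> T" using cs_scale[OF T f(1), of a] by simp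
  moreover have "scaleC a f' + scaleC l (scaleC a (sol T l u)) = scaleC a u"
    using f(2) by (metis cvs.scale_right_distrib cvs.scale_scale mult.commute)
  ultimately show "sol T l (scaleC a u) = scaleC a (sol T l u)" by (rule sol_eqI_inj[OF T s inj])
qed

lemma surjM_from_At:
  assumes s: "surj_at (main_transform \<Gamma>) (- z)"
  shows "surj_at (weyl_family \<Gamma> z) z"
  unfolding surj_at_def
proof
  fix v
  obtain a a' where aa: "(a, a') \<in> main_transform \<Gamma>" "a' + scaleC (- z) a = (0, - v)"
    using s unfolding surj_at_def by blast
  obtain f h where a: "a = (f, h)" by (cases a)
  obtain f' hh where a': "a' = (f', hh)" by (cases a')
  have G: "((f, f'), (h, - hh)) \<in> \<Gamma>" using aa(1) by (simp add: a a' At_mem)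
  have "f' = scaleC z f" using aa(2) by (simp add: a a' scaleC_minus_left)
  moreover have "hh - scaleC z h = - v" using aa(2) by (simp add: a a' scaleC_minus_left)
  then have "- (hh - scaleC z h) = v" by simp
  then have "- hh + scaleC z h = v" by (simp add: algebra_simps)
  ultimately show "\<exists>h h'. (h, h') \<in> weyl_family \<Gamma> z \<and> h' + scaleC z h = v"
    using G unfolding M_mem by blast
qed

lemma lbM_from_At:
  assumes l: "lb (main_transform \<Gamma>) (- z) c"
  shows "lb (weyl_family \<Gamma> z) z c"
  unfolding lb_def
proof (intro allI impI)
  fix h h' assume "(h, h') \<in> weyl_family \<Gamma> z"
  then obtain f where "((f, scaleC z f), (h, h')) \<in> \<Gamma>" unfolding M_mem by blast
  then have "((f, h), (scaleC z f, - h')) \<in> main_transform \<Gamma>" by (simp add: At_mem)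
  then have "norm (f, h) \<le> c * norm ((scaleC z f, - h') + scaleC (- z) (f, h))"
    using l unfolding lb_def by blast
  also have "(scaleC z f, - h') + scaleC (- z) (f, h) = (0, - (h' + scaleC z h))"
    by (simp add: scaleC_minus_left)
  also have "norm (0::'a, - (h' + scaleC z h)) = norm (h' + scaleC z h)" by (simp only: norm_Pair1 norm_minus_cancel)
  finally show "norm h \<le> c * norm (h' + scaleC z h)"
    using norm_snd_le[of h f] by linarith
qed

lemma plus_scalar_cs:
  assumes "csubspace T"
  shows "csubspace (rel_plus_scalar T c)"
  unfolding csubspace_def
proof (intro conjI ballI allI)
  show "0 \<in> rel_plus_scalar T c" unfolding rel_plus_scalar_def
    using cs_zero[OF assms] by (force simp: zero_prod_def)
next
  fix p q assume "p \<in> rel_plus_scalar T c" "q \<in> rel_plus_scalar T c"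
  then obtain f f' g g' where p: "p = (f, f' + scaleC c f)" "(f, f') \<in> T"
    and q: "q = (g, g' + scaleC c g)" "(g, g') \<in> T" unfolding rel_plus_scalar_def by blast
  have "(f + g, f' + g') \<in> T" using cs_add[OF assms p(2) q(2)] by simp
  moreover have "p + q = (f + g, (f' + g') + scaleC c (f + g))" using p q by (simp add: algebra_simps)
  ultimately show "p + q \<in> rel_plus_scalar T c" unfolding rel_plus_scalar_def by blast
next
  fix a p assume "p \<in> rel_plus_scalar T c"
  then obtain f f' where p: "p = (f, f' + scaleC c f)" "(f, f') \<in> T" unfolding rel_plus_scalar_def by blast
  have "(scaleC a f, scaleC a f') \<in> T" using cs_scale[OF assms p(2), of a] by simp
  moreover have "scaleC a p = (scaleC a f, scaleC a f' + scaleC c (scaleC a f))"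
    using p by (simp add: scaleC_add_right scaleC_scaleC mult.commute)
  ultimately show "scaleC a p \<in> rel_plus_scalar T c" unfolding rel_plus_scalar_def by blast
qed

lemma real_cinner_swap: "cinner (scaleC (complex_of_real x) f) g = cinner f (scaleC (complex_of_real x) g)"
  by (simp add: cinner_simps)

lemma b_to_a:
  assumes I: "isometric_rel \<Gamma>"
    and rA: "complex_of_real x \<in> rel_resolvent_set (main_transform \<Gamma>)"
  shows "selfadjoint_rel (weyl_family \<Gamma> (complex_of_real x)) \<and>
     0 \<in> rel_resolvent_set (rel_plus_scalar (weyl_family \<Gamma> (complex_of_real x)) (complex_of_real x))"
proof -
  let ?x = "complex_of_real x"
  let ?M = "weyl_family \<Gamma> ?x"
  let ?P = "rel_plus_scalar ?M ?x"
  have cG: "csubspace \<Gamma>" using iso_cs[OF I] .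
  have cM: "csubspace ?M" using M_cs[OF cG] .
  obtain B where B: "bounded_op B" "rel_shift_inv (main_transform \<Gamma>) (- ?x) = op_graph B"
    using rA unfolding resolvent_iff by blast
  have sA: "surj_at (main_transform \<Gamma>) (- ?x)" using graph_to_surj_lb(1)[OF B(2) B(1)] .
  obtain c where lA: "lb (main_transform \<Gamma>) (- ?x) c" using graph_to_surj_lb(2)[OF B(2) B(1)] by blast
  have sM: "surj_at ?M ?x" using surjM_from_At[OF sA] .
  have lM: "lb ?M ?x c" using lbM_from_At[OF lA] .
  have cP: "csubspace ?P" using plus_scalar_cs[OF cM] .
  have sP: "surj_at ?P 0"
    unfolding surj_at_def
  proof
    fix u
    obtain h h' where "(h, h') \<in> ?M" "h' + scaleC ?x h = u" using sM unfolding surj_at_def by blast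
    then show "\<exists>f f'. (f, f') \<in> ?P \<and> f' + scaleC 0 f = u" unfolding rel_plus_scalar_def by auto
  qed
  have lP: "lb ?P 0 c"
    unfolding lb_def
  proof (intro allI impI)
    fix f k assume "(f, k) \<in> ?P"
    then obtain f' where "k = f' + scaleC ?x f" "(f, f') \<in> ?M" unfolding rel_plus_scalar_def by blast
    then show "norm f \<le> c * norm (k + scaleC 0 f)" using lM unfolding lb_def by auto
  qed
  have "0 \<in> rel_resolvent_set ?P"
    unfolding resolvent_iff
  proof (intro exI conjI)
    show "bounded_op (sol ?P 0)" by (rule shift_inv_sol(2)[OF cP sP lP])
    show "rel_shift_inv ?P (- 0) = op_graph (sol ?P 0)" using shift_inv_sol(1)[OF cP sP lP] by simp
  qed
  moreover have "selfadjoint_rel ?M"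
    unfolding selfadjoint_rel_def
  proof
    have "weyl_family \<Gamma> (cnj ?x) \<subseteq> rel_adj ?M" using weyl_adj[OF I] .
    then show "?M \<subseteq> rel_adj ?M" by simp
    then show "rel_adj ?M \<subseteq> ?M"
      using adj_lemma[OF cM cM _ _ sM] sM by simp
  qed
  ultimately show ?thesis by blast
qed

lemma a_to_b:
  assumes I: "isometric_rel \<Gamma>" and HD: "H \<subseteq> Domain \<Gamma>"
    and rH: "complex_of_real x \<in> rel_resolvent_set H"
    and r0: "0 \<in> rel_resolvent_set (rel_plus_scalar (weyl_family \<Gamma> (complex_of_real x)) (complex_of_real x))"
  shows "complex_of_real x \<in> rel_resolvent_set (main_transform \<Gamma>)"
proof -
  let ?x = "complex_of_real x"
  let ?M = "weyl_family \<Gamma> ?x"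
  let ?P = "rel_plus_scalar ?M ?x"
  let ?A = "main_transform \<Gamma>"
  have cG: "csubspace \<Gamma>" using iso_cs[OF I] .
  have cA: "csubspace ?A" using At_cs[OF cG] .
  obtain BH where BH: "bounded_op BH" "rel_shift_inv H (- ?x) = op_graph BH"
    using rH unfolding resolvent_iff by blast
  have sH: "surj_at H (- ?x)" using graph_to_surj_lb(1)[OF BH(2) BH(1)] .
  obtain B0 where B0: "bounded_op B0" "rel_shift_inv ?P 0 = op_graph B0"
    using r0 unfolding resolvent_iff by auto
  have sP: "surj_at ?P 0" using graph_to_surj_lb(1)[OF B0(2) B0(1)] .
  have B0eq: "\<And>f f'. (f, f') \<in> ?P \<Longrightarrow> B0 (f' + scaleC 0 f) = f" using graph_to_surj_lb(3)[OF B0(2) B0(1)] .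
  have B00: "B0 0 = 0" using B0(1) clinear_zero unfolding bounded_op_def by blast
  have sM: "\<exists>h h'. (h, h') \<in> ?M \<and> h' + scaleC ?x h = v" for v
  proof -
    obtain f k where "(f, k) \<in> ?P" "k + scaleC 0 f = v" using sP unfolding surj_at_def by blast
    then show ?thesis unfolding rel_plus_scalar_def by auto
  qed
  have iM: "h = 0" if "(h, h') \<in> ?M" "h' + scaleC ?x h = 0" for h h'
  proof -
    have "(h, h' + scaleC ?x h) \<in> ?P" using that(1) unfolding rel_plus_scalar_def by blast
    from B0eq[OF this] show ?thesis using that(2) B00 by simp
  qed
  have sA: "surj_at ?A (- ?x)"
    unfolding surj_at_def
  proof
    fix y :: "'a \<times> 'b"
    obtain u v where y: "y = (u, v)" by (cases y)
    obtain f0 f0' where f0: "(f0, f0') \<in> H" "f0' + scaleC (- ?x) f0 = u" using sH unfolding surj_at_def by blast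
    then obtain hh where "((f0, f0'), hh) \<in> \<Gamma>" using HD by blast
    then obtain h0 h0' where G0: "((f0, f0'), (h0, h0')) \<in> \<Gamma>" by (cases hh) blast
    obtain k k' where k: "(k, k') \<in> ?M" "k' + scaleC ?x k = - v - (h0' + scaleC ?x h0)"
      using sM by blast
    obtain g where G1: "((g, scaleC ?x g), (k, k')) \<in> \<Gamma>" using k(1) unfolding M_mem by blast
    have "((f0, f0'), (h0, h0')) + ((g, scaleC ?x g), (k, k')) \<in> \<Gamma>" using cs_add[OF cG G0 G1] .
    then have "((f0 + g, f0' + scaleC ?x g), (h0 + k, - (- (h0' + k')))) \<in> \<Gamma>" by (simp add: add.commute)
    then have "((f0 + g, h0 + k), (f0' + scaleC ?x g, - (h0' + k'))) \<in> ?A" unfolding At_mem .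
    moreover have "(f0' + scaleC ?x g, - (h0' + k')) + scaleC (- ?x) (f0 + g, h0 + k) = y"
    proof -
      have e: "(k' + scaleC ?x k) + (h0' + scaleC ?x h0) = - v" using k(2) by simp
      have "- (h0' + k') + scaleC (- ?x) (h0 + k) = - ((k' + scaleC ?x k) + (h0' + scaleC ?x h0))"
        by (simp add: scaleC_minus_left algebra_simps)
      also have "\<dots> = v" using e by simp
      finally have 2: "- (h0' + k') + scaleC (- ?x) (h0 + k) = v" .
      have 1: "f0' + scaleC ?x g + scaleC (- ?x) (f0 + g) = u"
        using f0(2) by (simp add: scaleC_minus_left algebra_simps)
      show ?thesis using 1 2 unfolding y by simp
    qed
    ultimately show "\<exists>f f'. (f, f') \<in> ?A \<and> f' + scaleC (- ?x) f = y" by blast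
  qed
  have iA: "inj_at ?A (- ?x)"
    unfolding inj_at_def
  proof (intro allI impI)
    fix a a' assume aa: "(a, a') \<in> ?A" "a' + scaleC (- ?x) a = 0"
    obtain f h where a: "a = (f, h)" by (cases a)
    obtain f' hh where a': "a' = (f', hh)" by (cases a')
    have G: "((f, f'), (h, - hh)) \<in> \<Gamma>" using aa(1) by (simp add: a a' At_mem)
    have ff: "f' = scaleC ?x f" using aa(2) by (simp add: a a' scaleC_minus_left zero_prod_def)
    have hh: "hh = scaleC ?x h" using aa(2) by (simp add: a a' scaleC_minus_left zero_prod_def)
    have "(h, - hh) \<in> ?M" using G ff unfolding M_mem by blast
    then have h0: "h = 0" using iM[of h "- hh"] hh by simp
    then have G': "((f, scaleC ?x f), (0, 0)) \<in> \<Gamma>" using G ff hh by simp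
    have "cinner u f = 0" for u
    proof -
      obtain g g' where g: "(g, g') \<in> H" "g' + scaleC (- ?x) g = u" using sH unfolding surj_at_def by blast
      then obtain kk where "((g, g'), kk) \<in> \<Gamma>" using HD by blast
      then obtain k k' where Gk: "((g, g'), (k, k')) \<in> \<Gamma>" by (cases kk) blast
      from iso[OF I G' Gk] have "cinner (scaleC ?x f) g - cinner f g' = 0" by simp
      then have e1: "?x * cinner f g - cinner f g' = 0" by (simp add: cinner_scaleC_left)
      have "cinner f (g' + scaleC (- ?x) g) = cinner f g' - ?x * cinner f g"
        by (simp add: cinner_simps scaleC_minus_left)
      then have "cinner f (g' + scaleC (- ?x) g) = 0" using e1 by simp
      then have "cinner (g' + scaleC (- ?x) g) f = 0" using cinner_commute[of f "g' + scaleC (- ?x) g"] by simp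
      then show ?thesis using g(2) by simp
    qed
    then have "f = 0" by (rule cinner_eq_zero_all)
    then show "a = 0" using h0 a by (simp add: zero_prod_def)
  qed
  define R where "R = sol ?A (- ?x)"
  have linR: "clinear_op R" unfolding R_def using sol_linear_inj[OF cA sA iA] .
  have symR: "cinner (R u) w = cinner u (R w)" for u w
  proof -
    obtain a' where a: "(R u, a') \<in> ?A" "a' + scaleC (- ?x) (R u) = u" using sol_ex[OF sA] unfolding R_def by blast
    obtain b' where b: "(R w, b') \<in> ?A" "b' + scaleC (- ?x) (R w) = w" using sol_ex[OF sA] unfolding R_def by blast
    have s: "cinner a' (R w) = cinner (R u) b'" using At_sym[OF I a(1) b(1)] .
    have "cinner (R u) w = cinner (R u) (b' + scaleC (- ?x) (R w))" using b(2) by simp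
    also have "\<dots> = cinner (R u) b' - ?x * cinner (R u) (R w)"
      by (simp add: cinner_simps scaleC_minus_left)
    also have "\<dots> = cinner (a' + scaleC (- ?x) (R u)) (R w)"
      by (simp add: cinner_simps scaleC_minus_left s)
    also have "\<dots> = cinner u (R w)" using a(2) by simp
    finally show ?thesis .
  qed
  obtain K where K: "bnd R K" using hellinger_toeplitz[OF linR symR] by blast
  have lA: "lb ?A (- ?x) K"
    unfolding lb_def
  proof (intro allI impI)
    fix a a' assume "(a, a') \<in> ?A"
    then have "R (a' + scaleC (- ?x) a) = a" unfolding R_def by (intro sol_eqI_inj[OF cA sA iA]) auto
    moreover have "norm (R (a' + scaleC (- ?x) a)) \<le> K * norm (a' + scaleC (- ?x) a)"
      using K unfolding bnd_def by blast
    ultimately show "norm a \<le> K * norm (a' + scaleC (- ?x) a)" by simp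
  qed
  show ?thesis unfolding resolvent_iff
  proof (intro exI conjI)
    show "bounded_op (sol ?A (- ?x))" by (rule shift_inv_sol(2)[OF cA sA lA])
    show "rel_shift_inv ?A (- ?x) = op_graph (sol ?A (- ?x))" by (rule shift_inv_sol(1)[OF cA sA lA])
  qed
qed


lemma bnd_mono: "bnd F a \<Longrightarrow> a \<le> b \<Longrightarrow> bnd F b"
  unfolding bnd_def by (meson mult_right_mono norm_ge_zero order_trans)

lemma onorm_nonneg_bnd:
  assumes "\<And>x. norm (f x) \<le> b * norm x"
  shows "0 \<le> onorm f"
proof -
  have f0: "f 0 = 0" using assms[of 0] by simp
  have "norm (f x) / norm x \<le> max b 0" for x
  proof (cases "x = 0")
    case True then show ?thesis by simp
  next
    case False
    then have "norm (f x) / norm x \<le> b" using assms[of x] by (simp add: pos_divide_le_eq)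
    then show ?thesis by simp
  qed
  then have "bdd_above (range (\<lambda>x. norm (f x) / norm x))" by (intro bdd_aboveI2) blast
  then have "norm (f 0) / norm 0 \<le> onorm f" unfolding onorm_def
    using cSUP_upper[of 0 UNIV "\<lambda>x. norm (f x) / norm x"] by simp
  then show ?thesis by simp
qed

lemma onorm_le_bnd:
  assumes "\<And>x. norm (f x) \<le> b * norm x" "0 \<le> b"
  shows "onorm f \<le> b"
  using onorm_bound[OF assms(2) assms(1)] .

lemma X_cont_abs:
  fixes Q :: "complex \<Rightarrow> 'p::chilbert \<Rightarrow> 'k::chilbert" and R :: "complex \<Rightarrow> 'k \<Rightarrow> 'k"
    and X :: "complex \<Rightarrow> 'p \<Rightarrow> 'k" and Gm :: "'k \<Rightarrow> 'p"
  assumes zS: "z \<in> S" and w: "w \<in> S"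
    and Xdef: "\<And>w y. w \<in> S \<Longrightarrow> X w y = Q w y - scaleC (mu - w) (R w (Q w y))"
    and Rlin: "\<And>w. w \<in> S \<Longrightarrow> clinear_op (R w)" and Rb: "\<And>w. w \<in> S \<Longrightarrow> bnd (R w) kr"
    and KI: "\<And>w v. w \<in> S \<Longrightarrow> R w v - R z v = scaleC (w - z) (X w (Gm v))"
    and Xb: "\<And>w. w \<in> S \<Longrightarrow> bnd (X w) kx" and Gb: "bnd Gm kg"
    and Qd: "\<And>w y. w \<in> S \<Longrightarrow> norm (Q w y - Q z y) \<le> cmod (w - z) * k1 * norm y"
    and Qb: "bnd (Q z) k2"
    and e: "\<And>w. w \<in> S \<Longrightarrow> cmod (mu - w) \<le> e"
    and nn: "0 \<le> kr" "0 \<le> kx" "0 \<le> kg" "0 \<le> k1" "0 \<le> k2" "0 \<le> e"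
  shows "norm (X w y - X z y) \<le> cmod (w - z) * (k1 + e * kr * k1 + e * kx * kg * k2 + kr * k2) * norm y"
proof -
  define qw where "qw = Q w y"
  define qz where "qz = Q z y"
  have lw: "clinear_op (R w)" using Rlin[OF w] .
  have eq: "X w y - X z y = (qw - qz) - scaleC (mu - w) (R w (qw - qz))
      - scaleC (mu - w) (R w qz - R z qz) + scaleC (w - z) (R z qz)"
    unfolding Xdef[OF w] Xdef[OF zS] qw_def[symmetric] qz_def[symmetric] clinear_diff[OF lw]
    by (simp add: algebra_simps scaleC_diff_right scaleC_diff_left)
  have n1: "norm (qw - qz) \<le> cmod (w - z) * k1 * norm y" unfolding qw_def qz_def by (rule Qd[OF w])
  have n2: "norm (scaleC (mu - w) (R w (qw - qz))) \<le> e * kr * (cmod (w - z) * k1 * norm y)"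
  proof -
    have "norm (scaleC (mu - w) (R w (qw - qz))) = cmod (mu - w) * norm (R w (qw - qz))" by (rule norm_scaleC)
    also have "\<dots> \<le> e * (kr * norm (qw - qz))"
      using Rb[OF w] e[OF w] nn unfolding bnd_def by (intro mult_mono) auto
    also have "\<dots> \<le> e * (kr * (cmod (w - z) * k1 * norm y))"
      using n1 nn by (intro mult_left_mono) auto
    finally show ?thesis by (simp add: mult_ac)
  qed
  have nqz: "norm qz \<le> k2 * norm y" using Qb unfolding bnd_def qz_def by blast
  have n3: "norm (scaleC (mu - w) (R w qz - R z qz)) \<le> e * (cmod (w - z) * (kx * (kg * (k2 * norm y))))"
  proof -
    have "norm (scaleC (mu - w) (R w qz - R z qz)) = cmod (mu - w) * (cmod (w - z) * norm (X w (Gm qz)))"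
      unfolding KI[OF w] by (simp add: norm_scaleC norm_mult)
    also have "\<dots> \<le> e * (cmod (w - z) * (kx * norm (Gm qz)))"
      using Xb[OF w] e[OF w] nn unfolding bnd_def by (intro mult_mono) auto
    also have "\<dots> \<le> e * (cmod (w - z) * (kx * (kg * norm qz)))"
      using Gb nn unfolding bnd_def by (intro mult_left_mono) auto
    also have "\<dots> \<le> e * (cmod (w - z) * (kx * (kg * (k2 * norm y))))"
      using nqz nn by (intro mult_left_mono) auto
    finally show ?thesis .
  qed
  have n4: "norm (scaleC (w - z) (R z qz)) \<le> cmod (w - z) * (kr * (k2 * norm y))"
  proof -
    have "norm (scaleC (w - z) (R z qz)) = cmod (w - z) * norm (R z qz)" by (rule norm_scaleC)
    also have "\<dots> \<le> cmod (w - z) * (kr * norm qz)"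
      using Rb[OF zS] unfolding bnd_def by (intro mult_left_mono) auto
    also have "\<dots> \<le> cmod (w - z) * (kr * (k2 * norm y))"
      using nqz nn by (intro mult_left_mono) auto
    finally show ?thesis .
  qed
  have "norm (X w y - X z y) \<le> norm (qw - qz) + norm (scaleC (mu - w) (R w (qw - qz)))
      + norm (scaleC (mu - w) (R w qz - R z qz)) + norm (scaleC (w - z) (R z qz))"
    unfolding eq
    using norm_triangle_ineq[of "(qw - qz) - scaleC (mu - w) (R w (qw - qz)) - scaleC (mu - w) (R w qz - R z qz)" "scaleC (w - z) (R z qz)"]
      norm_triangle_ineq4[of "(qw - qz) - scaleC (mu - w) (R w (qw - qz))" "scaleC (mu - w) (R w qz - R z qz)"]
      norm_triangle_ineq4[of "qw - qz" "scaleC (mu - w) (R w (qw - qz))"]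
    by linarith
  also have "\<dots> \<le> cmod (w - z) * k1 * norm y + e * kr * (cmod (w - z) * k1 * norm y)
      + e * (cmod (w - z) * (kx * (kg * (k2 * norm y)))) + cmod (w - z) * (kr * (k2 * norm y))"
    using n1 n2 n3 n4 by linarith
  also have "\<dots> = cmod (w - z) * (k1 + e * kr * k1 + e * kx * kg * k2 + kr * k2) * norm y"
    by (simp add: algebra_simps)
  finally show ?thesis .
qed

lemma clinear_comp: "clinear_op F \<Longrightarrow> clinear_op G \<Longrightarrow> clinear_op (\<lambda>u. F (G u))"
  unfolding clinear_op_def by simp

lemma holo_abs:
  fixes R :: "complex \<Rightarrow> 'k::chilbert \<Rightarrow> 'k" and X :: "complex \<Rightarrow> 'p::chilbert \<Rightarrow> 'k" and Gm :: "'k \<Rightarrow> 'p"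
  assumes d: "d > 0"
    and KI: "\<And>w u. w \<noteq> z \<Longrightarrow> dist w z < d \<Longrightarrow> R w u - R z u = scaleC (w - z) (X w (Gm u))"
    and Xc: "\<And>w y. w \<noteq> z \<Longrightarrow> dist w z < d \<Longrightarrow> norm (X w y - X z y) \<le> cmod (w - z) * c1 * norm y"
    and Gl: "clinear_op Gm" and Gb: "bnd Gm kg" and Xl: "clinear_op (X z)" and Xb: "bnd (X z) kxz"
    and nn: "0 \<le> c1" "0 \<le> kg" "0 \<le> kxz"
  shows "\<exists>D. bounded_op D \<and> ((\<lambda>w. onorm (\<lambda>u. scaleC (1 / (w - z)) (R w u - R z u) - D u)) \<longlongrightarrow> 0) (at z)"
proof (intro exI[of _ "\<lambda>u. X z (Gm u)"] conjI)
  show "bounded_op (\<lambda>u. X z (Gm u))"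
  proof (rule bounded_opI)
    show "clinear_op (\<lambda>u. X z (Gm u))" using clinear_comp[OF Xl Gl] .
    show "bnd (\<lambda>u. X z (Gm u)) (kxz * kg)"
      unfolding bnd_def
    proof
      fix u
      have "norm (X z (Gm u)) \<le> kxz * norm (Gm u)" using Xb unfolding bnd_def by blast
      also have "\<dots> \<le> kxz * (kg * norm u)"
        using Gb nn unfolding bnd_def by (intro mult_left_mono) auto
      finally show "norm (X z (Gm u)) \<le> kxz * kg * norm u" by (simp add: mult_ac)
    qed
  qed
  show "((\<lambda>w. onorm (\<lambda>u. scaleC (1 / (w - z)) (R w u - R z u) - X z (Gm u))) \<longlongrightarrow> 0) (at z)"
  proof (rule Lim_null_comparison)
    show "((\<lambda>w. cmod (w - z) * (c1 * kg)) \<longlongrightarrow> 0) (at z)"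
      by (intro tendsto_eq_intros) (auto intro!: tendsto_eq_intros)
    show "\<forall>\<^sub>F w in at z. norm (onorm (\<lambda>u. scaleC (1 / (w - z)) (R w u - R z u) - X z (Gm u))) \<le> cmod (w - z) * (c1 * kg)"
      unfolding eventually_at
    proof (intro exI conjI ballI impI)
      show "d > 0" by (rule d)
      fix w assume "w \<in> UNIV" and w: "w \<noteq> z \<and> dist w z < d"
      have b: "norm (scaleC (1 / (w - z)) (R w u - R z u) - X z (Gm u)) \<le> cmod (w - z) * (c1 * kg) * norm u" for u
      proof -
        have "scaleC (1 / (w - z)) (R w u - R z u) = X w (Gm u)"
          using w unfolding KI[OF conjunct1[OF w] conjunct2[OF w]] by (simp add: scaleC_scaleC)
        then have "norm (scaleC (1 / (w - z)) (R w u - R z u) - X z (Gm u)) = norm (X w (Gm u) - X z (Gm u))" by simp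
        also have "\<dots> \<le> cmod (w - z) * c1 * norm (Gm u)" using Xc w by blast
        also have "\<dots> \<le> cmod (w - z) * c1 * (kg * norm u)"
          using Gb nn unfolding bnd_def by (intro mult_left_mono) auto
        finally show ?thesis by (simp add: mult_ac)
      qed
      have "0 \<le> onorm (\<lambda>u. scaleC (1 / (w - z)) (R w u - R z u) - X z (Gm u))"
        by (rule onorm_nonneg_bnd[OF b])
      moreover have "onorm (\<lambda>u. scaleC (1 / (w - z)) (R w u - R z u) - X z (Gm u)) \<le> cmod (w - z) * (c1 * kg)"
        by (rule onorm_le_bnd[OF b]) (use nn in simp)
      ultimately show "norm (onorm (\<lambda>u. scaleC (1 / (w - z)) (R w u - R z u) - X z (Gm u))) \<le> cmod (w - z) * (c1 * kg)"
        by simp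
    qed
  qed
qed


lemma clinear_fst: "clinear_op (fst :: ('a::chilbert \<times> 'b::chilbert) \<Rightarrow> 'a)"
  unfolding clinear_op_def by simp
lemma clinear_snd: "clinear_op (snd :: ('a::chilbert \<times> 'b::chilbert) \<Rightarrow> 'b)"
  unfolding clinear_op_def by simp
lemma clinear_pair0: "clinear_op (\<lambda>y::'a::chilbert. (y, 0::'b::chilbert))"
  unfolding clinear_op_def by simp
lemma clinear_0pair: "clinear_op (\<lambda>y::'b::chilbert. (0::'a::chilbert, y))"
  unfolding clinear_op_def by simp
lemma clinear_id: "clinear_op (\<lambda>y::'a::chilbert. y)"
  unfolding clinear_op_def by simp
lemma clinear_plus: "clinear_op F \<Longrightarrow> clinear_op G \<Longrightarrow> clinear_op (\<lambda>u. F u + G u)"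
  unfolding clinear_op_def by (simp add: algebra_simps)
lemma clinear_minus: "clinear_op F \<Longrightarrow> clinear_op G \<Longrightarrow> clinear_op (\<lambda>u. F u - G u)"
  unfolding clinear_op_def by (simp add: algebra_simps scaleC_diff_right)
lemma clinear_sc: "clinear_op F \<Longrightarrow> clinear_op (\<lambda>u. scaleC c (F u))"
  unfolding clinear_op_def by (simp add: scaleC_add_right scaleC_scaleC mult.commute)
lemma clinear_uminus: "clinear_op F \<Longrightarrow> clinear_op (\<lambda>u. - F u)"
  unfolding clinear_op_def by (simp add: scaleC_minus_right)

locale bpx =
  fixes \<Gamma> :: "(('h::chilbert \<times> 'h) \<times> ('k::chilbert \<times> 'k)) set" and x :: real
  assumes I: "isometric_rel \<Gamma>"
    and rA: "complex_of_real x \<in> rel_resolvent_set (main_transform \<Gamma>)"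
begin

abbreviation "At \<equiv> main_transform \<Gamma>"
abbreviation "M \<equiv> weyl_family \<Gamma>"

lemma cG: "csubspace \<Gamma>" using iso_cs[OF I] .
lemma cA: "csubspace At" using At_cs[OF cG] .
lemma cM: "csubspace (M z)" using M_cs[OF cG] .

lemma sA0: "surj_at At (- complex_of_real x)" and lA0: "\<exists>c. lb At (- complex_of_real x) c"
proof -
  obtain B where B: "bounded_op B" "rel_shift_inv At (- complex_of_real x) = op_graph B"
    using rA unfolding resolvent_iff by blast
  show "surj_at At (- complex_of_real x)" using graph_to_surj_lb(1)[OF B(2) B(1)] .
  show "\<exists>c. lb At (- complex_of_real x) c" using graph_to_surj_lb(2)[OF B(2) B(1)] .
qed

lemma lbAt: "Im l \<noteq> 0 \<Longrightarrow> lb At l (1 / \<bar>Im l\<bar>)"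
  using Im_bound_lb At_D[OF I] by blast

lemma surjAt: assumes l: "Im l \<noteq> 0" shows "surj_at At l"
proof -
  obtain c where c: "lb At (- complex_of_real x) c" using lA0 by blast
  define C where "C = max c 1"
  have C: "C \<ge> 1" unfolding C_def by simp
  have lC: "lb At (- complex_of_real x) C" using lb_mono[OF c] unfolding C_def by simp
  define s :: real where "s = (if Im l > 0 then 1 else -1)"
  define \<delta> where "\<delta> = 1 / (2 * C)"
  have dpos: "\<delta> > 0" using C unfolding \<delta>_def by simp
  define l1 where "l1 = - complex_of_real x + \<i> * complex_of_real (s * \<delta>)"
  have "cmod (l1 - (- complex_of_real x)) = \<delta>"
    unfolding l1_def s_def using dpos by (simp add: norm_mult)
  then have sm: "cmod (l1 - (- complex_of_real x)) * C < 1"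
    using C unfolding \<delta>_def by (simp add: field_simps)
  have s1: "surj_at At l1" by (rule perturb[OF cA sA0 lC _ sm]) (use C in simp)
  have "Im l1 * Im l > 0" unfolding l1_def s_def using dpos l
    by (auto simp: zero_less_mult_iff)
  then show ?thesis using segment_surj[OF cA s1 _ At_D[OF I]] by simp
qed

lemma unitary: "converse \<Gamma> = bdry_adj \<Gamma>"
proof
  show "converse \<Gamma> \<subseteq> bdry_adj \<Gamma>"
  proof
    fix p assume "p \<in> converse \<Gamma>"
    then obtain k k' g g' where p: "p = ((k, k'), (g, g'))" "((g, g'), (k, k')) \<in> \<Gamma>"
      by (metis converseE prod.exhaust)
    have "\<forall>((f, f'), (h, h')) \<in> \<Gamma>. cinner f' g - cinner f g' = cinner h' k - cinner h k'"
      using iso[OF I _ p(2)] by fast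
    then show "p \<in> bdry_adj \<Gamma>" unfolding bdry_adj_def p by simp
  qed
next
  show "bdry_adj \<Gamma> \<subseteq> converse \<Gamma>"
  proof
    fix p assume pb: "p \<in> bdry_adj \<Gamma>"
    obtain k k' g g' where p: "p = ((k, k'), (g, g'))" by (metis prod.exhaust)
    have B: "cinner f' g - cinner f g' = cinner h' k - cinner h k'" if "((f, f'), (h, h')) \<in> \<Gamma>" for f f' h h'
      using pb that unfolding p bdry_adj_def by fast
    let ?x = "complex_of_real x"
    obtain a a' where aa: "(a, a') \<in> At" "a' + scaleC (- ?x) a = (g' - scaleC ?x g, - k' - scaleC ?x k)"
      using sA0 unfolding surj_at_def by blast
    obtain f h where a: "a = (f, h)" by (cases a)
    obtain f' hh where a': "a' = (f', hh)" by (cases a')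
    have Gf: "((f, f'), (h, - hh)) \<in> \<Gamma>" using aa(1) by (simp add: a a' At_mem)
    define h' where "h' = - hh"
    have e1: "f' - scaleC ?x f = g' - scaleC ?x g" using aa(2) by (simp add: a a' scaleC_minus_left)
    have e2: "- h' - scaleC ?x h = - k' - scaleC ?x k" using aa(2) by (simp add: a a' h'_def scaleC_minus_left)
    define G where "G = g - f"
    define K where "K = k - h"
    have G': "g' - f' = scaleC ?x G" using e1 unfolding G_def by (simp add: scaleC_diff_right algebra_simps)
    have K': "k' - h' = - scaleC ?x K" using e2 unfolding K_def by (simp add: scaleC_diff_right algebra_simps)
    have orth: "cinner v (G, K) = 0" for v
    proof -
      obtain b b' where bb: "(b, b') \<in> At" "b' + scaleC (- ?x) b = v" using sA0 unfolding surj_at_def by blast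
      obtain q r where b: "b = (q, r)" by (cases b)
      obtain q' rr where b': "b' = (q', rr)" by (cases b')
      have Gq: "((q, q'), (r, - rr)) \<in> \<Gamma>" using bb(1) by (simp add: b b' At_mem)
      have 1: "cinner q' g - cinner q g' = cinner (- rr) k - cinner r k'" using B[OF Gq] .
      have 2: "cinner q' f - cinner q f' = cinner (- rr) h - cinner r (- hh)" using iso[OF I Gq Gf] .
      have 3: "(cinner q' g - cinner q g') - (cinner q' f - cinner q f') =
          (cinner (- rr) k - cinner r k') - (cinner (- rr) h - cinner r (- hh))"
        using 1 2 by (rule arg_cong2[where f="(-)"])
      have 4: "cinner q' G - cinner q (g' - f') = (cinner q' g - cinner q g') - (cinner q' f - cinner q f')"
        unfolding G_def by (simp add: cinner_simps algebra_simps)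
      have 5: "cinner (- rr) K - cinner r (k' - h') = (cinner (- rr) k - cinner r k') - (cinner (- rr) h - cinner r (- hh))"
        unfolding K_def h'_def by (simp add: cinner_simps algebra_simps)
      have "cinner q' G - cinner q (g' - f') = cinner (- rr) K - cinner r (k' - h')"
        unfolding 4 5 by (rule 3)
      then have "cinner q' G - cinner q (scaleC ?x G) = cinner (- rr) K + cinner r (scaleC ?x K)"
        unfolding G' K' by (simp add: cinner_simps)
      then have "cinner (q' + scaleC (- ?x) q) G + cinner (rr + scaleC (- ?x) r) K = 0"
        by (simp add: cinner_simps algebra_simps scaleC_minus_left)
      moreover have "cinner v (G, K) = cinner (q' + scaleC (- ?x) q) G + cinner (rr + scaleC (- ?x) r) K"
        unfolding bb(2)[symmetric] b b' by simp
      ultimately show ?thesis by simp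
    qed
    have "(G, K) = 0" using cinner_eq_zero_all[of "(G, K)"] orth by blast
    then have "G = 0" "K = 0" by (simp_all add: zero_prod_def)
    then have "g = f" "k = h" "g' = f'" "k' = h'" using G' K' unfolding G_def K_def by auto
    then show "p \<in> converse \<Gamma>" using Gf unfolding p h'_def by simp
  qed
qed

lemma surjMz: "Im z \<noteq> 0 \<Longrightarrow> surj_at (M z) z"
  by (rule surjM_from_At) (intro surjAt, simp)

lemma lbMz: "Im z \<noteq> 0 \<Longrightarrow> lb (M z) z (1 / \<bar>Im z\<bar>)"
  by (intro Im_bound_lb M_D[OF I]) auto

lemma surjMmu: "Im z * Im mu > 0 \<Longrightarrow> surj_at (M z) mu"
  by (rule segment_surj[OF cM surjMz _ M_D[OF I]]) auto

lemma lbMmu: "Im z * Im mu > 0 \<Longrightarrow> lb (M z) mu (1 / \<bar>Im mu\<bar>)"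
  by (intro Im_bound_lb M_D[OF I]) auto

lemma adjM: "Im z \<noteq> 0 \<Longrightarrow> rel_adj (M z) = M (cnj z)"
proof
  assume z: "Im z \<noteq> 0"
  have "M (cnj z) \<subseteq> rel_adj (M z)" using weyl_adj[OF I] .
  moreover have "surj_at (M (cnj z)) (cnj z)" using surjMz[of "cnj z"] z by simp
  ultimately show "rel_adj (M z) \<subseteq> M (cnj z)"
    using adj_lemma[OF cM cM _ _ surjMz[OF z]] by blast
  show "M (cnj z) \<subseteq> rel_adj (M z)" using weyl_adj[OF I] .
qed

lemma maxdiss: assumes "Im z > 0" shows "max_dissipative (M z)"
proof -
  have D: "dissipative_rel (M z)"
    unfolding dissipative_rel_def using cM M_D[OF I, of z \<i>] assms by auto
  have "S = M z" if S: "dissipative_rel S" "M z \<subseteq> S" for S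
  proof
    have cS: "csubspace S" using S(1) unfolding dissipative_rel_def by blast
    have "\<forall>f f'. (f, f') \<in> S \<longrightarrow> 0 \<le> Im (cinner f' f) * Im \<i>"
      using S(1) unfolding dissipative_rel_def by auto
    then show "S \<subseteq> M z" using max_lemma[OF cS S(2) surjMmu[of z \<i>]] assms by simp
    show "M z \<subseteq> S" by (rule S(2))
  qed
  then show ?thesis unfolding max_dissipative_def using D by blast
qed

lemma maxacc: assumes "Im z < 0" shows "max_accumulative (M z)"
proof -
  have D: "accumulative_rel (M z)"
  proof -
    have "\<forall>h h'. (h, h') \<in> M z \<longrightarrow> 0 \<le> Im (cinner h' h) * Im (- \<i>)"
      using M_D[OF I, of z "- \<i>"] assms by simp
    then show ?thesis unfolding accumulative_rel_def using cM by auto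
  qed
  have "S = M z" if S: "accumulative_rel S" "M z \<subseteq> S" for S
  proof
    have cS: "csubspace S" using S(1) unfolding accumulative_rel_def by blast
    have "\<forall>f f'. (f, f') \<in> S \<longrightarrow> 0 \<le> Im (cinner f' f) * Im (- \<i>)"
      using S(1) unfolding accumulative_rel_def by auto
    then show "S \<subseteq> M z" using max_lemma[OF cS S(2) surjMmu[of z "- \<i>"]] assms by simp
    show "M z \<subseteq> S" by (rule S(2))
  qed
  then show ?thesis unfolding max_accumulative_def using D by blast
qed

end


lemma norm_fst_le': "norm (fst p) \<le> norm p"
  by (cases p) (simp add: norm_fst_le)
lemma norm_snd_le': "norm (snd p) \<le> norm p"
  by (cases p) (simp add: norm_snd_le)

context bpx
begin

lemma At_lin: "Im l \<noteq> 0 \<Longrightarrow> clinear_op (sol At l)"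
  using sol_linear[OF cA surjAt lbAt] .
lemma At_bnd: "Im l \<noteq> 0 \<Longrightarrow> bnd (sol At l) (1 / \<bar>Im l\<bar>)"
  using sol_bnd[OF cA surjAt lbAt] .
lemma At_bnd': "Im l \<noteq> 0 \<Longrightarrow> norm (sol At (- l) y) \<le> (1 / \<bar>Im l\<bar>) * norm y"
proof -
  assume "Im l \<noteq> 0"
  then have "bnd (sol At (- l)) (1 / \<bar>Im l\<bar>)" using At_bnd[of "- l"] by simp
  then show ?thesis unfolding bnd_def by blast
qed

lemma RI:
  assumes z: "Im z \<noteq> 0" and w: "Im w \<noteq> 0"
  shows "sol At (- w) y - sol At (- z) y = scaleC (w - z) (sol At (- w) (sol At (- z) y))"
proof -
  have z': "Im (- z) \<noteq> 0" and w': "Im (- w) \<noteq> 0" using z w by auto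
  define a where "a = sol At (- z) y"
  obtain a' where a: "(a, a') \<in> At" "a' + scaleC (- z) a = y" using sol_ex[OF surjAt[OF z']] unfolding a_def by blast
  define b where "b = sol At (- w) y"
  obtain b' where b: "(b, b') \<in> At" "b' + scaleC (- w) b = y" using sol_ex[OF surjAt[OF w']] unfolding b_def by blast
  have ba: "(b - a, b' - a') \<in> At" using cs_diff[OF cA b(1) a(1)] by simp
  have e1: "(b' - a') + scaleC (- w) (b - a) = (b' + scaleC (- w) b) - (a' + scaleC (- z) a) + scaleC (w - z) a"
    by (simp add: algebra_simps scaleC_minus_left scaleC_diff_left scaleC_diff_right)
  have e0: "(b' + scaleC (- w) b) - (a' + scaleC (- z) a) = 0" by (simp only: a(2) b(2)) simp
  have "(b' - a') + scaleC (- w) (b - a) = scaleC (w - z) a" by (simp only: e1 e0 add_0_left)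
  then have "sol At (- w) (scaleC (w - z) a) = b - a" by (rule sol_eqI[OF cA surjAt[OF w'] lbAt[OF w'] ba])
  then show ?thesis unfolding a_def b_def using clinear_scale[OF At_lin[OF w']] by simp
qed

definition Rf :: "complex \<Rightarrow> complex \<Rightarrow> 'k \<Rightarrow> 'k" where
  "Rf mu w = sol (M w) mu"

definition Gam :: "complex \<Rightarrow> complex \<Rightarrow> 'k \<Rightarrow> 'h" where
  "Gam mu z u = fst (sol At (- z) (0, - (u + scaleC (z - mu) (Rf mu z u))))"

definition Qf :: "complex \<Rightarrow> 'h \<Rightarrow> 'k" where
  "Qf w y = snd (sol At (- w) (y, 0))"

definition Xf :: "complex \<Rightarrow> complex \<Rightarrow> 'h \<Rightarrow> 'k" where
  "Xf mu w y = Qf w y - scaleC (mu - w) (Rf mu w (Qf w y))"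

lemma R_lin: "Im z * Im mu > 0 \<Longrightarrow> clinear_op (Rf mu z)"
  unfolding Rf_def using sol_linear[OF cM surjMmu lbMmu] .
lemma R_bnd: "Im z * Im mu > 0 \<Longrightarrow> bnd (Rf mu z) (1 / \<bar>Im mu\<bar>)"
  unfolding Rf_def using sol_bnd[OF cM surjMmu lbMmu] .

lemma nz_of: "Im z * Im mu > 0 \<Longrightarrow> Im z \<noteq> 0" by auto
lemma nzm_of: "Im z * Im mu > 0 \<Longrightarrow> Im mu \<noteq> 0" by auto

lemma Gam_lin:
  assumes P: "Im z * Im mu > 0"
  shows "clinear_op (Gam mu z)"
proof -
  have z': "Im (- z) \<noteq> 0" using P by auto
  have l1: "clinear_op (\<lambda>u. u + scaleC (z - mu) (Rf mu z u))"
    by (intro clinear_plus clinear_id clinear_sc R_lin[OF P])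
  have l2: "clinear_op (\<lambda>u. (0::'h, - (u + scaleC (z - mu) (Rf mu z u))))"
    using clinear_comp[OF clinear_0pair clinear_uminus[OF l1]] by simp
  have l3: "clinear_op (\<lambda>u. fst (sol At (- z) (0::'h, - (u + scaleC (z - mu) (Rf mu z u)))))"
    using clinear_comp[OF clinear_fst clinear_comp[OF At_lin[OF z'] l2]] by simp
  then show ?thesis unfolding Gam_def[abs_def] .
qed

lemma Gam_bnd:
  assumes P: "Im z * Im mu > 0"
  shows "bnd (Gam mu z) ((1 + cmod (z - mu) / \<bar>Im mu\<bar>) / \<bar>Im z\<bar>)"
  unfolding bnd_def
proof
  fix u
  have z: "Im z \<noteq> 0" and m: "Im mu \<noteq> 0" using P by auto
  have "norm (Gam mu z u) \<le> norm (sol At (- z) (0, - (u + scaleC (z - mu) (Rf mu z u))))"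
    unfolding Gam_def by (rule norm_fst_le')
  also have "\<dots> \<le> (1 / \<bar>Im z\<bar>) * norm ((0::'h), - (u + scaleC (z - mu) (Rf mu z u)))"
    by (rule At_bnd'[OF z])
  also have "norm ((0::'h), - (u + scaleC (z - mu) (Rf mu z u))) = norm (u + scaleC (z - mu) (Rf mu z u))"
    by (simp only: norm_Pair1 norm_minus_cancel)
  finally have A: "norm (Gam mu z u) \<le> (1 / \<bar>Im z\<bar>) * norm (u + scaleC (z - mu) (Rf mu z u))" .
  have "norm (u + scaleC (z - mu) (Rf mu z u)) \<le> norm u + cmod (z - mu) * norm (Rf mu z u)"
    using norm_triangle_ineq[of u "scaleC (z - mu) (Rf mu z u)"] by (simp add: norm_scaleC)
  also have "\<dots> \<le> norm u + cmod (z - mu) * ((1 / \<bar>Im mu\<bar>) * norm u)"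
    using R_bnd[OF P] unfolding bnd_def by (intro add_left_mono mult_left_mono) auto
  finally have B: "norm (u + scaleC (z - mu) (Rf mu z u)) \<le> norm u + cmod (z - mu) * ((1 / \<bar>Im mu\<bar>) * norm u)" .
  have "norm (Gam mu z u) \<le> (1 / \<bar>Im z\<bar>) * (norm u + cmod (z - mu) * ((1 / \<bar>Im mu\<bar>) * norm u))"
    using A mult_left_mono[OF B, of "1 / \<bar>Im z\<bar>"] by simp
  also have "\<dots> = (1 + cmod (z - mu) / \<bar>Im mu\<bar>) / \<bar>Im z\<bar> * norm u"
    by (simp add: field_simps)
  finally show "norm (Gam mu z u) \<le> (1 + cmod (z - mu) / \<bar>Im mu\<bar>) / \<bar>Im z\<bar> * norm u" .
qed

lemma Q_lin: "Im w \<noteq> 0 \<Longrightarrow> clinear_op (Qf w)"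
proof -
  assume w: "Im w \<noteq> 0"
  then have w': "Im (- w) \<noteq> 0" by simp
  have "clinear_op (\<lambda>y. snd (sol At (- w) (y, 0::'k)))"
    using clinear_comp[OF clinear_snd clinear_comp[OF At_lin[OF w'] clinear_pair0]] by simp
  then show ?thesis unfolding Qf_def[abs_def] .
qed

lemma Q_bnd: "Im w \<noteq> 0 \<Longrightarrow> bnd (Qf w) (1 / \<bar>Im w\<bar>)"
  unfolding bnd_def Qf_def
proof
  fix y assume w: "Im w \<noteq> 0"
  have "norm (snd (sol At (- w) (y, 0::'k))) \<le> norm (sol At (- w) (y, 0::'k))"
    by (rule norm_snd_le')
  also have "\<dots> \<le> (1 / \<bar>Im w\<bar>) * norm (y, 0::'k)" by (rule At_bnd'[OF w])
  finally show "norm (snd (sol At (- w) (y, 0::'k))) \<le> 1 / \<bar>Im w\<bar> * norm y" by simp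
qed

lemma Q_diff:
  assumes z: "Im z \<noteq> 0" and w: "Im w \<noteq> 0"
  shows "norm (Qf w y - Qf z y) \<le> cmod (w - z) * (1 / (\<bar>Im w\<bar> * \<bar>Im z\<bar>)) * norm y"
proof -
  have "Qf w y - Qf z y = snd (sol At (- w) (y, 0) - sol At (- z) (y, 0))" unfolding Qf_def by simp
  also have "\<dots> = snd (scaleC (w - z) (sol At (- w) (sol At (- z) (y, 0))))" unfolding RI[OF z w] ..
  finally have "norm (Qf w y - Qf z y) \<le> norm (scaleC (w - z) (sol At (- w) (sol At (- z) (y, 0::'k))))"
    using norm_snd_le'[of "scaleC (w - z) (sol At (- w) (sol At (- z) (y, 0::'k)))"] by simp
  also have "\<dots> = cmod (w - z) * norm (sol At (- w) (sol At (- z) (y, 0::'k)))" by (rule norm_scaleC)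
  also have "\<dots> \<le> cmod (w - z) * ((1 / \<bar>Im w\<bar>) * ((1 / \<bar>Im z\<bar>) * norm y))"
  proof (intro mult_left_mono)
    have "norm (sol At (- w) (sol At (- z) (y, 0::'k))) \<le> (1 / \<bar>Im w\<bar>) * norm (sol At (- z) (y, 0::'k))"
      by (rule At_bnd'[OF w])
    also have "\<dots> \<le> (1 / \<bar>Im w\<bar>) * ((1 / \<bar>Im z\<bar>) * norm (y, 0::'k))"
      by (intro mult_left_mono At_bnd'[OF z]) simp
    finally show "norm (sol At (- w) (sol At (- z) (y, 0::'k))) \<le> (1 / \<bar>Im w\<bar>) * ((1 / \<bar>Im z\<bar>) * norm y)"
      by simp
  qed simp
  finally show ?thesis by (simp add: mult_ac)
qed

lemma X_lin: "Im w * Im mu > 0 \<Longrightarrow> clinear_op (Xf mu w)"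
proof -
  assume P: "Im w * Im mu > 0"
  then have w: "Im w \<noteq> 0" by auto
  have "clinear_op (\<lambda>y. Qf w y - scaleC (mu - w) (Rf mu w (Qf w y)))"
    by (intro clinear_minus Q_lin[OF w] clinear_sc clinear_comp[OF R_lin[OF P] Q_lin[OF w]])
  then show ?thesis unfolding Xf_def[abs_def] .
qed

lemma X_bnd:
  assumes P: "Im w * Im mu > 0"
  shows "bnd (Xf mu w) ((1 + cmod (mu - w) / \<bar>Im mu\<bar>) / \<bar>Im w\<bar>)"
  unfolding bnd_def
proof
  fix y
  have w: "Im w \<noteq> 0" and m: "Im mu \<noteq> 0" using P by auto
  have q: "norm (Qf w y) \<le> (1 / \<bar>Im w\<bar>) * norm y" using Q_bnd[OF w] unfolding bnd_def by blast
  have "norm (Xf mu w y) \<le> norm (Qf w y) + cmod (mu - w) * norm (Rf mu w (Qf w y))"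
    unfolding Xf_def using norm_triangle_ineq4[of "Qf w y" "scaleC (mu - w) (Rf mu w (Qf w y))"]
    by (simp add: norm_scaleC)
  also have "\<dots> \<le> norm (Qf w y) + cmod (mu - w) * ((1 / \<bar>Im mu\<bar>) * norm (Qf w y))"
    using R_bnd[OF P] unfolding bnd_def by (intro add_left_mono mult_left_mono) auto
  also have "\<dots> = (1 + cmod (mu - w) / \<bar>Im mu\<bar>) * norm (Qf w y)" by (simp add: field_simps)
  also have "\<dots> \<le> (1 + cmod (mu - w) / \<bar>Im mu\<bar>) * ((1 / \<bar>Im w\<bar>) * norm y)"
    using q by (intro mult_left_mono) auto
  finally show "norm (Xf mu w y) \<le> (1 + cmod (mu - w) / \<bar>Im mu\<bar>) / \<bar>Im w\<bar> * norm y" by simp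
qed

end


context bpx
begin

lemma KI:
  assumes Pz: "Im z * Im mu > 0" and Pw: "Im w * Im mu > 0"
  shows "Rf mu w u - Rf mu z u = scaleC (w - z) (Xf mu w (Gam mu z u))"
proof -
  have z: "Im z \<noteq> 0" and w: "Im w \<noteq> 0" using Pz Pw by auto
  have z': "Im (- z) \<noteq> 0" and w': "Im (- w) \<noteq> 0" using z w by auto
  define a where "a = Rf mu z u"
  obtain a' where a: "(a, a') \<in> M z" "a' + scaleC mu a = u"
    using sol_ex[OF surjMmu[OF Pz]] unfolding a_def Rf_def by blast
  obtain f where fa: "((f, scaleC z f), (a, a')) \<in> \<Gamma>" using a(1) unfolding M_mem by blast
  have Af: "((f, a), (scaleC z f, - a')) \<in> At" using fa by (simp add: At_mem)
  have "(scaleC z f, - a') + scaleC (- z) (f, a) = (0, - (u + scaleC (z - mu) a))"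
  proof -
    have "- a' + scaleC (- z) a = - (a' + scaleC mu a + scaleC (z - mu) a)"
      by (simp add: algebra_simps scaleC_minus_left scaleC_diff_left)
    then have "- a' + scaleC (- z) a = - (u + scaleC (z - mu) a)" by (simp only: a(2))
    then show ?thesis by (simp add: scaleC_minus_left)
  qed
  then have "sol At (- z) (0, - (u + scaleC (z - mu) a)) = (f, a)"
    using sol_eqI[OF cA surjAt[OF z'] lbAt[OF z'] Af] by simp
  then have GamE: "Gam mu z u = f" unfolding Gam_def a_def[symmetric] by simp
  define pq where "pq = sol At (- w) (f, 0)"
  obtain pp where pp: "(pq, pp) \<in> At" "pp + scaleC (- w) pq = (f, 0)"
    using sol_ex[OF surjAt[OF w']] unfolding pq_def by blast
  obtain p q where pqe: "pq = (p, q)" by (cases pq)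
  obtain p' qq where ppe: "pp = (p', qq)" by (cases pp)
  have Gp: "((p, p'), (q, - qq)) \<in> \<Gamma>" using pp(1) by (simp add: pqe ppe At_mem)
  have pe1: "p' + scaleC (- w) p = f" and qe1: "qq + scaleC (- w) q = 0"
    using pp(2) by (simp_all add: pqe ppe)
  have "p' = (p' + scaleC (- w) p) + scaleC w p" by (simp add: scaleC_minus_left)
  then have p'e: "p' = f + scaleC w p" by (simp only: pe1)
  have "qq = (qq + scaleC (- w) q) + scaleC w q" by (simp add: scaleC_minus_left)
  then have qqe: "qq = scaleC w q" by (simp only: qe1 add_0_left)
  have Qe: "Qf w f = q" unfolding Qf_def pq_def[symmetric] pqe by simp
  define b where "b = Rf mu w u"
  obtain b' where b: "(b, b') \<in> M w" "b' + scaleC mu b = u"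
    using sol_ex[OF surjMmu[OF Pw]] unfolding b_def Rf_def by blast
  obtain g where gb: "((g, scaleC w g), (b, b')) \<in> \<Gamma>" using b(1) unfolding M_mem by blast
  have E: "((g, scaleC w g), (b, b')) - ((f, scaleC z f), (a, a')) - scaleC (w - z) ((p, p'), (q, - qq)) \<in> \<Gamma>"
    using cs_diff[OF cG cs_diff[OF cG gb fa] cs_scale[OF cG Gp]] .
  define \<phi> where "\<phi> = g - f - scaleC (w - z) p"
  define \<beta> where "\<beta> = b - a - scaleC (w - z) q"
  define \<beta>' where "\<beta>' = b' - a' + scaleC (w - z) qq"
  have E1: "((g, scaleC w g), (b, b')) - ((f, scaleC z f), (a, a')) - scaleC (w - z) ((p, p'), (q, - qq))
      = ((g - f - scaleC (w - z) p, scaleC w g - scaleC z f - scaleC (w - z) p'),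
         (b - a - scaleC (w - z) q, b' - a' - scaleC (w - z) (- qq)))"
    by simp
  have C2: "scaleC w g - scaleC z f - scaleC (w - z) p' = scaleC w \<phi>"
    unfolding \<phi>_def p'e by (simp add: algebra_simps scaleC_diff_left scaleC_diff_right)
  have C4: "b' - a' - scaleC (w - z) (- qq) = \<beta>'" unfolding \<beta>'_def by (simp add: scaleC_minus_right)
  have E': "((\<phi>, scaleC w \<phi>), (\<beta>, \<beta>')) \<in> \<Gamma>"
    using E unfolding E1 C2 C4 by (simp only: \<phi>_def \<beta>_def)
  have \<beta>M: "(\<beta>, \<beta>') \<in> M w" using E' unfolding M_mem by blast
  have "\<beta>' + scaleC mu \<beta> = (b' + scaleC mu b) - (a' + scaleC mu a) + scaleC ((w - z) * (w - mu)) q"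
    unfolding \<beta>_def \<beta>'_def qqe by (simp add: algebra_simps scaleC_diff_left scaleC_diff_right)
  also have "(b' + scaleC mu b) - (a' + scaleC mu a) = 0" by (simp only: a(2) b(2)) simp
  finally have \<beta>eq: "\<beta>' + scaleC mu \<beta> = scaleC ((w - z) * (w - mu)) q" by simp
  have "Rf mu w (scaleC ((w - z) * (w - mu)) q) = \<beta>"
    unfolding Rf_def by (rule sol_eqI[OF cM surjMmu[OF Pw] lbMmu[OF Pw] \<beta>M \<beta>eq])
  then have \<beta>e: "\<beta> = scaleC ((w - z) * (w - mu)) (Rf mu w q)"
    using clinear_scale[OF R_lin[OF Pw]] by simp
  have "b - a = \<beta> + scaleC (w - z) q" unfolding \<beta>_def by simp
  then show ?thesis
    unfolding GamE Xf_def Qe a_def[symmetric] b_def[symmetric] \<beta>e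
    by (simp add: algebra_simps scaleC_diff_left scaleC_diff_right)
qed

lemma near:
  assumes Pz: "Im z * Im mu > 0" and d: "dist w z < \<bar>Im z\<bar> / 2"
  shows "Im w * Im mu > 0" "\<bar>Im z\<bar> / 2 \<le> \<bar>Im w\<bar>" "cmod (mu - w) \<le> cmod (mu - z) + \<bar>Im z\<bar> / 2"
proof -
  have i: "\<bar>Im w - Im z\<bar> < \<bar>Im z\<bar> / 2"
    using d abs_Im_le_cmod[of "w - z"] unfolding dist_norm by simp
  have i1: "Im w - Im z < \<bar>Im z\<bar> / 2" "Im z - Im w < \<bar>Im z\<bar> / 2" using i abs_ge_self[of "Im w - Im z"] abs_ge_minus_self[of "Im w - Im z"] by linarith+
  have "(Im z > 0 \<and> Im mu > 0) \<or> (Im z < 0 \<and> Im mu < 0)" using Pz by (auto simp: zero_less_mult_iff)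
  then have "Im w * Im mu > 0 \<and> \<bar>Im z\<bar> / 2 \<le> \<bar>Im w\<bar>"
  proof
    assume c: "Im z > 0 \<and> Im mu > 0"
    then have "Im w > Im z / 2" using i1 by simp
    then show ?thesis using c by (simp add: mult_pos_pos)
  next
    assume c: "Im z < 0 \<and> Im mu < 0"
    then have "Im w < Im z / 2" using i1 by simp
    then show ?thesis using c by (simp add: mult_neg_neg)
  qed
  then show "Im w * Im mu > 0" "\<bar>Im z\<bar> / 2 \<le> \<bar>Im w\<bar>" by auto
  have "cmod (mu - w) \<le> cmod (mu - z) + cmod (z - w)"
    using norm_triangle_ineq[of "mu - z" "z - w"] by simp
  also have "cmod (z - w) = dist w z" by (simp add: dist_norm norm_minus_commute)
  finally show "cmod (mu - w) \<le> cmod (mu - z) + \<bar>Im z\<bar> / 2" using d by simp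
qed

lemma holoz:
  assumes Pz: "Im z * Im mu > 0"
  shows "\<exists>D. bounded_op D \<and> ((\<lambda>w. onorm (\<lambda>u. scaleC (1 / (w - z)) (Rf mu w u - Rf mu z u) - D u)) \<longlongrightarrow> 0) (at z)"
proof -
  have z: "Im z \<noteq> 0" and mz: "Im mu \<noteq> 0" using Pz by auto
  define d where "d = \<bar>Im z\<bar> / 2"
  define m where "m = \<bar>Im mu\<bar>"
  define e where "e = cmod (mu - z) + d"
  define kr where "kr = 1 / m"
  define kx where "kx = (1 + e / m) / d"
  define kg where "kg = (1 + cmod (z - mu) / m) / \<bar>Im z\<bar>"
  define k1 where "k1 = 1 / (d * \<bar>Im z\<bar>)"
  define k2 where "k2 = 1 / \<bar>Im z\<bar>"
  define c1 where "c1 = k1 + e * kr * k1 + e * kx * kg * k2 + kr * k2"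
  define S where "S = {w. dist w z < d}"
  have dpos: "d > 0" and mpos: "m > 0" using z mz unfolding d_def m_def by auto
  have epos: "e \<ge> 0" unfolding e_def using dpos by simp
  have nn: "0 \<le> kr" "0 \<le> kx" "0 \<le> kg" "0 \<le> k1" "0 \<le> k2"
    unfolding kr_def kx_def kg_def k1_def k2_def using dpos mpos epos by auto
  have c1nn: "0 \<le> c1" unfolding c1_def using nn epos by simp
  have zS: "z \<in> S" unfolding S_def using dpos by simp
  have nearS: "Im w * Im mu > 0" "d \<le> \<bar>Im w\<bar>" "cmod (mu - w) \<le> e" if "w \<in> S" for w
    using near[OF Pz, of w] that unfolding S_def d_def e_def by auto
  have Xc: "norm (Xf mu w y - Xf mu z y) \<le> cmod (w - z) * c1 * norm y" if w: "w \<in> S" for w y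
    unfolding c1_def
  proof (rule X_cont_abs[where S = S and Q = Qf and R = "Rf mu" and X = "Xf mu" and Gm = "Gam mu z"
        and mu = mu and kr = kr and kx = kx and kg = kg and ?k1.0 = k1 and ?k2.0 = k2 and e = e, OF zS w])
    show "\<And>w y. w \<in> S \<Longrightarrow> Xf mu w y = Qf w y - scaleC (mu - w) (Rf mu w (Qf w y))"
      by (simp add: Xf_def)
    show "\<And>w. w \<in> S \<Longrightarrow> clinear_op (Rf mu w)" using R_lin nearS(1) by blast
    show "\<And>w. w \<in> S \<Longrightarrow> bnd (Rf mu w) kr" using R_bnd nearS(1) unfolding kr_def m_def by blast
    show "\<And>w v. w \<in> S \<Longrightarrow> Rf mu w v - Rf mu z v = scaleC (w - z) (Xf mu w (Gam mu z v))"
      using KI[OF Pz] nearS(1) by blast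
    show "\<And>w. w \<in> S \<Longrightarrow> bnd (Xf mu w) kx"
    proof -
      fix w assume wS: "w \<in> S"
      have "(1 + cmod (mu - w) / \<bar>Im mu\<bar>) / \<bar>Im w\<bar> \<le> (1 + e / m) / d"
      proof (rule frac_le)
        show "0 \<le> 1 + e / m" using epos mpos by simp
        show "1 + cmod (mu - w) / \<bar>Im mu\<bar> \<le> 1 + e / m"
          using nearS(3)[OF wS] mpos unfolding m_def by (simp add: divide_right_mono)
        show "0 < d" by (rule dpos)
        show "d \<le> \<bar>Im w\<bar>" by (rule nearS(2)[OF wS])
      qed
      then show "bnd (Xf mu w) kx" unfolding kx_def using bnd_mono[OF X_bnd[OF nearS(1)[OF wS]]] by blast
    qed
    show "bnd (Gam mu z) kg" unfolding kg_def m_def by (rule Gam_bnd[OF Pz])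
    show "\<And>w y. w \<in> S \<Longrightarrow> norm (Qf w y - Qf z y) \<le> cmod (w - z) * k1 * norm y"
    proof -
      fix w and y :: 'h assume wS: "w \<in> S"
      have w0: "Im w \<noteq> 0" using nearS(1)[OF wS] by auto
      have "1 / (\<bar>Im w\<bar> * \<bar>Im z\<bar>) \<le> k1" unfolding k1_def
        using nearS(2)[OF wS] dpos z by (intro divide_left_mono mult_right_mono mult_pos_pos) auto
      then have "cmod (w - z) * (1 / (\<bar>Im w\<bar> * \<bar>Im z\<bar>)) * norm y \<le> cmod (w - z) * k1 * norm y"
        by (intro mult_right_mono mult_left_mono) auto
      then show "norm (Qf w y - Qf z y) \<le> cmod (w - z) * k1 * norm y"
        using Q_diff[OF z w0, of y] by linarith
    qed
    show "bnd (Qf z) k2" unfolding k2_def by (rule Q_bnd[OF z])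
    show "\<And>w. w \<in> S \<Longrightarrow> cmod (mu - w) \<le> e" using nearS(3) by blast
  qed (use nn epos in auto)
  show ?thesis
  proof (rule holo_abs[where d = d and ?c1.0 = c1 and kg = kg and kxz = "(1 + cmod (mu - z) / \<bar>Im mu\<bar>) / \<bar>Im z\<bar>"])
    show "d > 0" by (rule dpos)
    show "\<And>w u. w \<noteq> z \<Longrightarrow> dist w z < d \<Longrightarrow> Rf mu w u - Rf mu z u = scaleC (w - z) (Xf mu w (Gam mu z u))"
      using KI[OF Pz] nearS(1) unfolding S_def by blast
    show "\<And>w y. w \<noteq> z \<Longrightarrow> dist w z < d \<Longrightarrow> norm (Xf mu w y - Xf mu z y) \<le> cmod (w - z) * c1 * norm y"
      using Xc unfolding S_def by blast
    show "clinear_op (Gam mu z)" by (rule Gam_lin[OF Pz])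
    show "bnd (Gam mu z) kg" unfolding kg_def m_def by (rule Gam_bnd[OF Pz])
    show "clinear_op (Xf mu z)" by (rule X_lin[OF Pz])
    show "bnd (Xf mu z) ((1 + cmod (mu - z) / \<bar>Im mu\<bar>) / \<bar>Im z\<bar>)" by (rule X_bnd[OF Pz])
  qed (use c1nn nn mz z in auto)
qed

lemma graphR: "Im z * Im mu > 0 \<Longrightarrow> rel_shift_inv (M z) mu = op_graph (Rf mu z)"
  unfolding Rf_def using shift_inv_sol(1)[OF cM surjMmu lbMmu] .

lemma holo_mu:
  assumes mz: "Im mu \<noteq> 0"
  shows "op_holomorphic_on {z. Im z * Im mu > 0} (Rf mu)"
  unfolding op_holomorphic_on_def
proof (intro conjI ballI)
  show "open {z. Im z * Im mu > 0}"
    using open_Collect_less[of "\<lambda>z. 0" "\<lambda>z. Im z * Im mu"] by (simp add: continuous_intros)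
  fix z assume "z \<in> {z. Im z * Im mu > 0}"
  then have Pz: "Im z * Im mu > 0" by simp
  show "bounded_op (Rf mu z)" by (rule bounded_opI[OF R_lin[OF Pz] R_bnd[OF Pz]])
  show "\<exists>D. bounded_op D \<and> ((\<lambda>w. onorm (\<lambda>u. scaleC (1 / (w - z)) (Rf mu w u - Rf mu z u) - D u)) \<longlongrightarrow> 0) (at z)"
    by (rule holoz[OF Pz])
qed

lemma nev: "nevanlinna_family M"
  unfolding nevanlinna_family_def
proof (intro conjI allI impI)
  show "\<And>z. Im z > 0 \<Longrightarrow> max_dissipative (M z)" by (rule maxdiss)
  show "\<And>z. Im z < 0 \<Longrightarrow> max_accumulative (M z)" by (rule maxacc)
  show "\<And>z. Im z \<noteq> 0 \<Longrightarrow> rel_adj (M z) = M (cnj z)" by (rule adjM)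
  show "\<exists>mu R. Im mu > 0 \<and> (\<forall>z. Im z > 0 \<longrightarrow> rel_shift_inv (M z) mu = op_graph (R z))
        \<and> op_holomorphic_on {z. Im z > 0} R"
  proof (intro exI conjI allI impI)
    show "Im \<i> > 0" by simp
    show "\<And>z. Im z > 0 \<Longrightarrow> rel_shift_inv (M z) \<i> = op_graph (Rf \<i> z)" using graphR by simp
    show "op_holomorphic_on {z. Im z > 0} (Rf \<i>)" using holo_mu[of \<i>] by simp
  qed
  show "\<exists>mu R. Im mu < 0 \<and> (\<forall>z. Im z < 0 \<longrightarrow> rel_shift_inv (M z) mu = op_graph (R z))
        \<and> op_holomorphic_on {z. Im z < 0} R"
  proof (intro exI conjI allI impI)
    show "Im (- \<i>) < 0" by simp
    show "\<And>z. Im z < 0 \<Longrightarrow> rel_shift_inv (M z) (- \<i>) = op_graph (Rf (- \<i>) z)" using graphR by simp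
    have "{z. Im z * Im (- \<i>) > 0} = {z. Im z < 0}" by auto
    then show "op_holomorphic_on {z. Im z < 0} (Rf (- \<i>))" using holo_mu[of "- \<i>"] by simp
  qed
qed

end

theorem mainTheorem13:
  fixes A :: "('h::chilbert \<times> 'h) set"
    and \<Gamma> :: "(('h \<times> 'h) \<times> ('k::chilbert \<times> 'k)) set"
    and H :: "('h \<times> 'h) set"
    and x :: real
  assumes "closed_symmetric A"
    and "isometric_boundary_pair A \<Gamma>"
    and "selfadjoint_rel H" and "A \<subseteq> H" and "H \<subseteq> Domain \<Gamma>"
    and "complex_of_real x \<in> rel_resolvent_set H"
  shows "((selfadjoint_rel (weyl_family \<Gamma> (complex_of_real x)) \<and>
            0 \<in> rel_resolvent_set (rel_plus_scalar (weyl_family \<Gamma> (complex_of_real x)) (complex_of_real x)))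
          \<longleftrightarrow> complex_of_real x \<in> rel_resolvent_set (main_transform \<Gamma>))
       \<and> (complex_of_real x \<in> rel_resolvent_set (main_transform \<Gamma>) \<longrightarrow>
            unitary_boundary_pair A \<Gamma> \<and> nevanlinna_family (weyl_family \<Gamma>))"
proof -
  have I: "isometric_rel \<Gamma>" using assms(2) unfolding isometric_boundary_pair_def by blast
  have i: "(selfadjoint_rel (weyl_family \<Gamma> (complex_of_real x)) \<and>
            0 \<in> rel_resolvent_set (rel_plus_scalar (weyl_family \<Gamma> (complex_of_real x)) (complex_of_real x)))
          \<longleftrightarrow> complex_of_real x \<in> rel_resolvent_set (main_transform \<Gamma>)"
    using b_to_a[OF I] a_to_b[OF I assms(5) assms(6)] by blast
  have ii: "complex_of_real x \<in> rel_resolvent_set (main_transform \<Gamma>) \<longrightarrow>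
            unitary_boundary_pair A \<Gamma> \<and> nevanlinna_family (weyl_family \<Gamma>)"
  proof
    assume r: "complex_of_real x \<in> rel_resolvent_set (main_transform \<Gamma>)"
    interpret bpx \<Gamma> x using I r by unfold_locales
    have "unitary_rel \<Gamma>" unfolding unitary_rel_def using I unitary by blast
    then have "unitary_boundary_pair A \<Gamma>"
      using assms(2) unfolding isometric_boundary_pair_def unitary_boundary_pair_def by blast
    then show "unitary_boundary_pair A \<Gamma> \<and> nevanlinna_family (weyl_family \<Gamma>)" using nev by blast
  qed
  show ?thesis using i ii by blast
qed


end
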